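(* Let $\vec G=(G,\alpha,w)$ be a finite magnetic graph with underlying graph $G=(V,E,\partial)$, let $V_1\subseteq V_0\subseteq V$, and let $A$ be an $s$-partition of $r\in\mathbb{N}$. Then the spectrum of the normalised magnetic Laplacian of the $V_1$-contracted $A$-union $\vec F_{A,V_1}=\vec F_{A,V_1}(\vec G,V_0)$ is $$\operatorname{spec}(\vec F_{A,V_1})=\operatorname{spec}(\vec G)\uplus\operatorname{spec}(\vec G^+_{V_0})^{(r-s)}\uplus\operatorname{spec}(\vec G^+_{V_1})^{(s-1)}.$$
   Context: A graph $G=(V,E,\partial)$: finite disjoint sets $V,E$, incidence $\partial e=(\partial_-e,\partial_+e)$, inversion $e\mapsto\bar e$ ($\bar{\bar e}=e$, $\bar e\ne e$, $\partial_\pm\bar e=\partial_\mp e$); loops/multiple edges allowed; $E_v=\{e:\partial_-e=v\}$, $\deg v=|E_v|>0$. A magnetic graph $\vec G=(G,\alpha,w)$ has $w:E\to(0,\infty)$, $w_{\bar e}=w_e$, and $\alpha:E\to\mathbb{R}/2\pi\mathbb{Z}$, $\alpha_{\bar e}=-\alpha_e$; $\deg^wv=\sum_{e\in E_v}w_e$. The (normalised) magnetic Laplacian on $\ell^2(V,\deg^w)$ is $(\Delta f)(v)=f(v)-\frac1{\deg^wv}\sum_{e\in E_v}w_ee^{i\alpha_e}f(\partial_+e)$; $\operatorname{spec}(\vec G)$ is its eigenvalue multiset. For $W\subseteq V$, $\operatorname{spec}(\vec G^+_W)$ is the eigenvalue multiset of the Dirichlet Laplacian $\iota_W^*\Delta\iota_W$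 with $\iota_W:\ell^2(V\setminus W,\deg^w)\to\ell^2(V,\deg^w)$ extension by zero. Contraction of vertices along an equivalence relation keeps all edges (with their weights and potentials) and replaces vertices by classes, incidence $e\mapsto([\partial_-e],[\partial_+e])$. Frame member: $G^a$ is the disjoint union of $a$ copies $G\times\{j\}$; with $(v,i)\sim(v',j)$ iff $(v,i)=(v',j)$ or ($v=v'\in V_0$), $F_a(\vec G,V_0)=G^a/\!\sim$ with $w_{(e,j)}=w_e$, $\alpha_{(e,j)}=\alpha_e$. An $s$-partition of $r$ is a multiset $A=\{\!\{a_1,\dots,a_s\}\!\}$ of natural numbers with sum $r$. $\vec F_A=\bigsqcup_{i=1}^sF_{a_i}(\vec G,V_0)\times\{i\}$, and $\vec F_{A,V_1}$ is obtained from $\vec F_A$ by contracting, for each $v_1\in V_1$, the $s$ vertices $([v_1],i)$, $i=1,\dots,s$, into one vertex. Multisets: $\uplus$ adds multiplicities; $M^{(k)}$ multiplies multiplicities by $k$ ($M^{(0)}$ empty). *)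

theory Defs
  imports Complex_Main "HOL-Computational_Algebra.Polynomial" "HOL-Library.Multiset"
    "HOL-Combinatorics.Permutations"
begin

text \<open>A (magnetic) graph: vertex set, edge set, incidence (tail, head), inversion,
  weight w and magnetic potential alpha (a real representative of an element of R/2piZ;
  only exp(i alpha) enters the Laplacian).\<close>

record ('v, 'e) mgraph =
  mg_V :: "'v set"
  mg_E :: "'e set"
  mg_src :: "'e \<Rightarrow> 'v"
  mg_tgt :: "'e \<Rightarrow> 'v"
  mg_inv :: "'e \<Rightarrow> 'e"
  mg_w :: "'e \<Rightarrow> real"
  mg_alpha :: "'e \<Rightarrow> real"

definition magnetic_graph :: "('v, 'e) mgraph \<Rightarrow> bool" where
  "magnetic_graph G \<longleftrightarrow>
     finite (mg_V G) \<and> finite (mg_E G) \<and>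
     (\<forall>e\<in>mg_E G.
        mg_src G e \<in> mg_V G \<and> mg_tgt G e \<in> mg_V G \<and>
        mg_inv G e \<in> mg_E G \<and> mg_inv G (mg_inv G e) = e \<and> mg_inv G e \<noteq> e \<and>
        mg_src G (mg_inv G e) = mg_tgt G e \<and> mg_tgt G (mg_inv G e) = mg_src G e \<and>
        mg_w G e > 0 \<and> mg_w G (mg_inv G e) = mg_w G e \<and>
        (\<exists>k::int. mg_alpha G (mg_inv G e) = - mg_alpha G e + 2 * pi * of_int k)) \<and>
     (\<forall>v\<in>mg_V G. \<exists>e\<in>mg_E G. mg_src G e = v)"

definition out_edges :: "('v, 'e) mgraph \<Rightarrow> 'v \<Rightarrow> 'e set" where
  "out_edges G v = {e \<in> mg_E G. mg_src G e = v}"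

definition wdeg :: "('v, 'e) mgraph \<Rightarrow> 'v \<Rightarrow> real" where
  "wdeg G v = (\<Sum>e\<in>out_edges G v. mg_w G e)"

text \<open>Matrix of the normalised magnetic Laplacian in the standard basis (delta functions):
  (Delta f)(v) = f(v) - 1/deg^w v * sum_{e in E_v} w_e e^{i alpha_e} f(tgt e).\<close>

definition lap :: "('v, 'e) mgraph \<Rightarrow> 'v \<Rightarrow> 'v \<Rightarrow> complex" where
  "lap G v u = (if v = u then 1 else 0)
     - (\<Sum>e\<in>{e\<in>out_edges G v. mg_tgt G e = u}.
          complex_of_real (mg_w G e) * exp (\<i> * complex_of_real (mg_alpha G e)))
       / complex_of_real (wdeg G v)"

definition charpoly_on :: "'v set \<Rightarrow> ('v \<Rightarrow> 'v \<Rightarrow> complex) \<Rightarrow> complex poly" where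
  "charpoly_on S M = (\<Sum>p\<in>{p. p permutes S}. of_int (sign p) *
      (\<Prod>v\<in>S. if p v = v then [:- M v v, 1:] else [:- M v (p v):]))"

definition spec :: "('v, 'e) mgraph \<Rightarrow> complex multiset" where
  "spec G = proots (charpoly_on (mg_V G) (lap G))"

text \<open>Dirichlet Laplacian iota_W^* Delta iota_W on l^2(V - W, deg^w): since the weighted inner
  product is diagonal, iota_W^* is restriction to V - W, so its matrix is the
  (V - W) x (V - W) block of the Laplacian matrix.\<close>
definition dirichlet_spec :: "('v, 'e) mgraph \<Rightarrow> 'v set \<Rightarrow> complex multiset" where
  "dirichlet_spec G W = proots (charpoly_on (mg_V G - W) (lap G))"

definition contract :: "('v, 'e) mgraph \<Rightarrow> 'v rel \<Rightarrow> ('v set, 'e) mgraph" where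
  "contract G R = \<lparr> mg_V = mg_V G // R, mg_E = mg_E G,
      mg_src = (\<lambda>e. R `` {mg_src G e}), mg_tgt = (\<lambda>e. R `` {mg_tgt G e}),
      mg_inv = mg_inv G, mg_w = mg_w G, mg_alpha = mg_alpha G \<rparr>"

definition copies :: "('v, 'e) mgraph \<Rightarrow> nat \<Rightarrow> ('v \<times> nat, 'e \<times> nat) mgraph" where
  "copies G a = \<lparr> mg_V = mg_V G \<times> {..<a}, mg_E = mg_E G \<times> {..<a},
      mg_src = (\<lambda>(e, j). (mg_src G e, j)), mg_tgt = (\<lambda>(e, j). (mg_tgt G e, j)),
      mg_inv = (\<lambda>(e, j). (mg_inv G e, j)), mg_w = (\<lambda>(e, j). mg_w G e),
      mg_alpha = (\<lambda>(e, j). mg_alpha G e) \<rparr>"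

definition frame_rel :: "('v, 'e) mgraph \<Rightarrow> 'v set \<Rightarrow> nat \<Rightarrow> (('v \<times> nat) \<times> ('v \<times> nat)) set" where
  "frame_rel G V0 a = {((v, i), (v', j)). (v, i) \<in> mg_V G \<times> {..<a} \<and> (v', j) \<in> mg_V G \<times> {..<a} \<and>
      ((v, i) = (v', j) \<or> (v = v' \<and> v \<in> V0))}"

definition frame :: "('v, 'e) mgraph \<Rightarrow> 'v set \<Rightarrow> nat \<Rightarrow> (('v \<times> nat) set, 'e \<times> nat) mgraph" where
  "frame G V0 a = contract (copies G a) (frame_rel G V0 a)"

text \<open>The vertex [v] of F_a(G, V0) (for v in V0 it does not depend on the copy).\<close>
definition frame_cls :: "('v, 'e) mgraph \<Rightarrow> 'v set \<Rightarrow> nat \<Rightarrow> 'v \<Rightarrow> ('v \<times> nat) set" where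
  "frame_cls G V0 a v = frame_rel G V0 a `` {(v, 0)}"

definition dunion :: "(nat \<Rightarrow> ('v, 'e) mgraph) \<Rightarrow> nat \<Rightarrow> ('v \<times> nat, 'e \<times> nat) mgraph" where
  "dunion H s = \<lparr> mg_V = {(x, i). i < s \<and> x \<in> mg_V (H i)},
      mg_E = {(e, i). i < s \<and> e \<in> mg_E (H i)},
      mg_src = (\<lambda>(e, i). (mg_src (H i) e, i)), mg_tgt = (\<lambda>(e, i). (mg_tgt (H i) e, i)),
      mg_inv = (\<lambda>(e, i). (mg_inv (H i) e, i)), mg_w = (\<lambda>(e, i). mg_w (H i) e),
      mg_alpha = (\<lambda>(e, i). mg_alpha (H i) e) \<rparr>"

definition A_union :: "('v, 'e) mgraph \<Rightarrow> 'v set \<Rightarrow> nat multiset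
     \<Rightarrow> ((('v \<times> nat) set) \<times> nat, ('e \<times> nat) \<times> nat) mgraph" where
  "A_union G V0 A = (let as = sorted_list_of_multiset A in
      dunion (\<lambda>i. frame G V0 (as ! i)) (length as))"

definition contr_rel :: "('v, 'e) mgraph \<Rightarrow> 'v set \<Rightarrow> nat multiset \<Rightarrow> 'v set
     \<Rightarrow> ((('v \<times> nat) set \<times> nat) \<times> (('v \<times> nat) set \<times> nat)) set" where
  "contr_rel G V0 A V1 = (let as = sorted_list_of_multiset A in
      {((x, i), (y, j)). (x, i) \<in> mg_V (A_union G V0 A) \<and> (y, j) \<in> mg_V (A_union G V0 A) \<and>
        ((x, i) = (y, j) \<or>
         (\<exists>v1\<in>V1. x = frame_cls G V0 (as ! i) v1 \<and> y = frame_cls G V0 (as ! j) v1))})"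

definition contracted_A_union :: "('v, 'e) mgraph \<Rightarrow> 'v set \<Rightarrow> nat multiset \<Rightarrow> 'v set
     \<Rightarrow> ((('v \<times> nat) set \<times> nat) set, ('e \<times> nat) \<times> nat) mgraph" where
  "contracted_A_union G V0 A V1 = contract (A_union G V0 A) (contr_rel G V0 A V1)"

end

theory Submission
  imports Defs "Jordan_Normal_Form.Char_Poly"
begin

definition det_on :: "'a set \<Rightarrow> ('a \<Rightarrow> 'a \<Rightarrow> 'b::comm_ring_1) \<Rightarrow> 'b" where
  "det_on S F = (\<Sum>p\<in>{p. p permutes S}. of_int (sign p) * (\<Prod>v\<in>S. F v (p v)))"

definition xm :: "('a \<Rightarrow> 'a \<Rightarrow> complex) \<Rightarrow> 'a \<Rightarrow> 'a \<Rightarrow> complex poly" where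
  "xm M u v = (if u = v then [:- M u u, 1:] else [:- M u v:])"

lemma charpoly_det_on: "charpoly_on S M = det_on S (xm M)"
  unfolding charpoly_on_def det_on_def xm_def
  by (intro sum.cong refl arg_cong2[where f="(*)"] prod.cong) auto

lemma det_on_cong:
  assumes "\<And>u v. u \<in> S \<Longrightarrow> v \<in> S \<Longrightarrow> F u v = F' u v"
  shows "det_on S F = det_on S F'"
  unfolding det_on_def
  by (intro sum.cong refl arg_cong2[where f="(*)"] prod.cong)
     (use assms in \<open>auto simp: permutes_in_image\<close>)

lemma det_on_reindex:
  assumes bij: "bij_betw h S' S" and fin: "finite S'"
  shows "det_on S F = det_on S' (\<lambda>a b. F (h a) (h b))"
proof -
  let ?\<Phi> = "\<lambda>\<pi> x. if x \<in> S then h (\<pi> (inv_into S' h x)) else x"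
  have b: "bij_betw ?\<Phi> {\<pi>. \<pi> permutes S'} {\<pi>. \<pi> permutes S}"
    by (rule bij_betw_permutations[OF bij])
  have "det_on S F = (\<Sum>p\<in>{p. p permutes S'}. of_int (sign (?\<Phi> p)) * (\<Prod>v\<in>S. F v (?\<Phi> p v)))"
    unfolding det_on_def by (rule sum.reindex_bij_betw[OF b, symmetric])
  also have "\<dots> = det_on S' (\<lambda>a b. F (h a) (h b))"
    unfolding det_on_def
  proof (intro sum.cong refl)
    fix p assume p: "p \<in> {p. p permutes S'}"
    have inj: "inj_on h S'" using bij_betw_imp_inj_on[OF bij] .
    have hS: "h ` S' = S" using bij_betw_imp_surj_on[OF bij] .
    have "?\<Phi> p = map_permutation S' h p"
      unfolding map_permutation_def restrict_id_def hS by (auto simp: fun_eq_iff)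
    hence sg: "sign (?\<Phi> p) = sign p" using sign_map_permutation[OF inj _ fin] p by simp
    have "(\<Prod>v\<in>S. F v (?\<Phi> p v)) = (\<Prod>a\<in>S'. F (h a) (?\<Phi> p (h a)))"
      by (rule prod.reindex_bij_betw[OF bij, symmetric])
    also have "\<dots> = (\<Prod>a\<in>S'. F (h a) (h (p a)))"
      using bij by (intro prod.cong refl) (auto simp: bij_betw_inv_into_left bij_betw_apply)
    finally show "of_int (sign (?\<Phi> p)) * (\<Prod>v\<in>S. F v (?\<Phi> p v)) =
        of_int (sign p) * (\<Prod>a\<in>S'. F (h a) (h (p a)))" using sg by simp
  qed
  finally show ?thesis .
qed

lemma det_on_jnf: "det_on {0..<n} F = det (mat n n (\<lambda>(i,j). F i j))"
proof -
  have "det (mat n n (\<lambda>(i,j). F i j)) = (\<Sum> p \<in> {p. p permutes {0 ..< n}}.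
     of_int (sign p) * (\<Prod> i = 0 ..< n. mat n n (\<lambda>(i,j). F i j) $$ (i, p i)))"
    by (rule det_def') simp
  also have "\<dots> = det_on {0..<n} F" unfolding det_on_def
  proof (intro sum.cong refl arg_cong2[where f="(*)"] prod.cong)
    fix p i assume "p \<in> {p. p permutes {0..<n}}" "i \<in> {0..<n}"
    hence "p i < n" using permutes_in_image[of p "{0..<n}" i] by simp
    thus "mat n n (\<lambda>(i,j). F i j) $$ (i, p i) = F i (p i)" using \<open>i \<in> {0..<n}\<close> by simp
  qed
  finally show ?thesis by simp
qed

lemma det_on_mult:
  assumes fin: "finite S"
  shows "det_on S (\<lambda>u w. \<Sum>v\<in>S. F u v * G v w) = det_on S F * det_on S G"
proof -
  obtain e where e: "bij_betw e {0..<card S} S" using ex_bij_betw_nat_finite[OF fin] by blast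
  let ?n = "card S"
  let ?A = "mat ?n ?n (\<lambda>(i,j). F (e i) (e j))"
  let ?B = "mat ?n ?n (\<lambda>(i,j). G (e i) (e j))"
  have AB: "?A * ?B = mat ?n ?n (\<lambda>(i,j). \<Sum>v\<in>S. F (e i) v * G v (e j))"
  proof (rule eq_matI)
    fix i j assume i: "i < dim_row (mat ?n ?n (\<lambda>(i,j). \<Sum>v\<in>S. F (e i) v * G v (e j)))"
      and j: "j < dim_col (mat ?n ?n (\<lambda>(i,j). \<Sum>v\<in>S. F (e i) v * G v (e j)))"
    have "(?A * ?B) $$ (i,j) = (\<Sum>k=0..<?n. F (e i) (e k) * G (e k) (e j))"
      using i j by (simp add: scalar_prod_def)
    also have "\<dots> = (\<Sum>v\<in>S. F (e i) v * G v (e j))"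
      by (rule sum.reindex_bij_betw[OF e])
    finally show "(?A * ?B) $$ (i,j) = mat ?n ?n (\<lambda>(i,j). \<Sum>v\<in>S. F (e i) v * G v (e j)) $$ (i,j)"
      using i j by simp
  qed auto
  have "det_on S (\<lambda>u w. \<Sum>v\<in>S. F u v * G v w) = det (?A * ?B)"
    by (subst det_on_reindex[OF e], simp, subst AB, subst det_on_jnf, simp)
  also have "\<dots> = det ?A * det ?B" by (rule det_mult[of _ ?n]) auto
  also have "\<dots> = det_on S F * det_on S G"
    by (subst (1 2) det_on_reindex[OF e], simp_all add: det_on_jnf)
  finally show ?thesis .
qed

lemma det_on_zero:
  fixes F :: "'a \<Rightarrow> 'a \<Rightarrow> 'b::field"
  assumes fin: "finite S" and z: "det_on S F = 0"
  shows "\<exists>l. (\<exists>v\<in>S. l v \<noteq> 0) \<and> (\<forall>u\<in>S. (\<Sum>v\<in>S. F u v * l v) = 0)"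
proof -
  obtain e where e: "bij_betw e {0..<card S} S" using ex_bij_betw_nat_finite[OF fin] by blast
  let ?n = "card S"
  let ?A = "mat ?n ?n (\<lambda>(i,j). F (e i) (e j))"
  have "det ?A = 0" using z by (subst (asm) det_on_reindex[OF e]) (simp_all add: det_on_jnf)
  then obtain x where x: "x \<in> carrier_vec ?n" "x \<noteq> 0\<^sub>v ?n" "?A *\<^sub>v x = 0\<^sub>v ?n"
    using det_0_iff_vec_prod_zero_field[of ?A ?n] by auto
  define l where "l = (\<lambda>v. x $ (inv_into {0..<?n} e v))"
  have ie: "\<And>i. i < ?n \<Longrightarrow> inv_into {0..<?n} e (e i) = i"
    using e by (simp add: bij_betw_inv_into_left)
  from x obtain i where i: "i < ?n" "x $ i \<noteq> 0" by (auto simp: vec_eq_iff)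
  have "e i \<in> S" using e i by (auto dest: bij_betwE)
  moreover have "l (e i) \<noteq> 0" using i ie by (simp add: l_def)
  moreover have "(\<Sum>v\<in>S. F u v * l v) = 0" if u: "u \<in> S" for u
  proof -
    obtain k where k: "k < ?n" "u = e k" using e u unfolding bij_betw_def by force
    have "(\<Sum>v\<in>S. F u v * l v) = (\<Sum>j=0..<?n. F (e k) (e j) * l (e j))"
      unfolding k(2) by (rule sum.reindex_bij_betw[OF e, symmetric])
    also have "\<dots> = (?A *\<^sub>v x) $ k" using k x(1) ie
      by (auto simp: scalar_prod_def l_def intro!: sum.cong)
    also have "\<dots> = 0" using x(3) k by simp
    finally show ?thesis .
  qed
  ultimately show ?thesis by blast
qed

lemma det_on_const_poly:
  fixes F :: "'a \<Rightarrow> 'a \<Rightarrow> 'b::comm_ring_1"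
  shows "det_on S (\<lambda>u v. [:F u v:]) = [:det_on S F:]"
proof -
  have B: "\<And>p. (\<Prod>v\<in>S. [:F v (p v):]) = [:\<Prod>v\<in>S. F v (p v):]"
    by (induct S rule: infinite_finite_induct) (auto simp: mult_to_poly)
  moreover have "\<And>p. (of_int (sign p) :: 'b poly) = [:of_int (sign p):]"
    by (simp add: of_int_poly)
  note A = this
  show ?thesis unfolding det_on_def sum_to_poly[symmetric]
  proof (intro sum.cong refl)
    fix p
    show "of_int (sign p) * (\<Prod>v\<in>S. [:F v (p v):]) = [:of_int (sign p) * (\<Prod>v\<in>S. F v (p v)):]"
      by (simp only: A B mult_to_poly)
  qed
qed

lemma det_on_pad:
  assumes fin: "finite S" and sub: "S1 \<subseteq> S"
    and id: "\<And>u v. u \<in> S - S1 \<Longrightarrow> v \<in> S \<Longrightarrow> F u v = (if u = v then 1 else 0)"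
  shows "det_on S F = det_on S1 F"
proof -
  have "det_on S F = (\<Sum>p\<in>{p. p permutes S1}. of_int (sign p) * (\<Prod>v\<in>S. F v (p v)))"
    unfolding det_on_def
  proof (rule sum.mono_neutral_right)
    show "finite {p. p permutes S}" using finite_permutations[OF fin] .
    show "{p. p permutes S1} \<subseteq> {p. p permutes S}" using permutes_subset[OF _ sub] by blast
    show "\<forall>p\<in>{p. p permutes S} - {p. p permutes S1}. of_int (sign p) * (\<Prod>v\<in>S. F v (p v)) = 0"
    proof
      fix p assume p: "p \<in> {p. p permutes S} - {p. p permutes S1}"
      hence pS: "p permutes S" by simp
      have "\<exists>u\<in>S - S1. p u \<noteq> u"
      proof (rule ccontr)
        assume "\<not> ?thesis"
        hence "\<forall>x. x \<notin> S1 \<longrightarrow> p x = x" using pS permutes_not_in by fastforce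
        hence "p permutes S1" using pS unfolding permutes_def by blast
        thus False using p by simp
      qed
      then obtain u where u: "u \<in> S - S1" "p u \<noteq> u" by blast
      have "p u \<in> S" using permutes_in_image[OF pS] u by simp
      hence "F u (p u) = 0" using id[OF u(1)] u(2) by simp
      hence "(\<Prod>v\<in>S. F v (p v)) = 0" using u fin by (intro prod_zero) auto
      thus "of_int (sign p) * (\<Prod>v\<in>S. F v (p v)) = 0" by simp
    qed
  qed
  also have "\<dots> = det_on S1 F" unfolding det_on_def
  proof (intro sum.cong refl arg_cong2[where f="(*)"])
    fix p assume p: "p \<in> {p. p permutes S1}"
    have "(\<Prod>v\<in>S. F v (p v)) = (\<Prod>v\<in>S - S1. F v (p v)) * (\<Prod>v\<in>S1. F v (p v))"
      using prod.subset_diff[OF sub fin] by simp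
    also have "(\<Prod>v\<in>S - S1. F v (p v)) = 1"
      using p id by (intro prod.neutral) (auto simp: permutes_not_in)
    finally show "(\<Prod>v\<in>S. F v (p v)) = (\<Prod>v\<in>S1. F v (p v))" by simp
  qed
  finally show ?thesis .
qed

lemma det_on_block2:
  assumes f1: "finite S1" and f2: "finite S2" and disj: "S1 \<inter> S2 = {}"
    and z1: "\<And>u v. u \<in> S1 \<Longrightarrow> v \<in> S2 \<Longrightarrow> F u v = 0"
    and z2: "\<And>u v. u \<in> S2 \<Longrightarrow> v \<in> S1 \<Longrightarrow> F u v = 0"
  shows "det_on (S1 \<union> S2) F = det_on S1 F * det_on S2 F"
proof -
  define F1 where "F1 = (\<lambda>u v. if u \<in> S1 \<and> v \<in> S1 then F u v else (if u = v then 1 else 0))"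
  define F2 where "F2 = (\<lambda>u v. if u \<in> S2 \<and> v \<in> S2 then F u v else (if u = v then 1 else 0))"
  let ?S = "S1 \<union> S2"
  have fin: "finite ?S" using f1 f2 by simp
  have prod: "F u w = (\<Sum>v\<in>?S. F1 u v * F2 v w)" if u: "u \<in> ?S" and w: "w \<in> ?S" for u w
  proof -
    have "(\<Sum>v\<in>?S. F1 u v * F2 v w) = (\<Sum>v\<in>S1. F1 u v * F2 v w) + (\<Sum>v\<in>S2. F1 u v * F2 v w)"
      by (rule sum.union_disjoint[OF f1 f2 disj])
    also have "\<dots> = F u w"
    proof (cases "u \<in> S1")
      case True
      hence uS2: "u \<notin> S2" using disj by blast
      have a: "(\<Sum>v\<in>S2. F1 u v * F2 v w) = 0"
        using True uS2 disj by (intro sum.neutral) (auto simp: F1_def)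
      show ?thesis
      proof (cases "w \<in> S1")
        case True
        hence "w \<notin> S2" using disj by blast
        hence "(\<Sum>v\<in>S1. F1 u v * F2 v w) = (\<Sum>v\<in>S1. if v = w then F u v else 0)"
          using \<open>u \<in> S1\<close> \<open>w \<notin> S2\<close> disj by (intro sum.cong refl) (auto simp: F1_def F2_def)
        also have "\<dots> = F u w" using True f1 by simp
        finally show ?thesis using a by simp
      next
        case False
        hence wS2: "w \<in> S2" using w by blast
        have "(\<Sum>v\<in>S1. F1 u v * F2 v w) = 0"
          using \<open>u \<in> S1\<close> disj wS2 by (intro sum.neutral) (auto simp: F1_def F2_def)
        thus ?thesis using a z1[OF \<open>u \<in> S1\<close> wS2] by simp
      qed
    next
      case False
      hence uS2: "u \<in> S2" using u by blast
      have a: "(\<Sum>v\<in>S1. F1 u v * F2 v w) = 0"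
        using False by (intro sum.neutral) (auto simp: F1_def)
      have "(\<Sum>v\<in>S2. F1 u v * F2 v w) = (\<Sum>v\<in>S2. if v = u then F2 u w else 0)"
        using False uS2 by (intro sum.cong refl) (auto simp: F1_def)
      also have "\<dots> = F2 u w" using uS2 f2 by simp
      also have "\<dots> = F u w"
      proof (cases "w \<in> S2")
        case True thus ?thesis using uS2 by (simp add: F2_def)
      next
        case False
        hence "w \<in> S1" using w by blast
        thus ?thesis using uS2 False z2[OF uS2] by (auto simp: F2_def)
      qed
      finally show ?thesis using a by simp
    qed
    finally show ?thesis by simp
  qed
  have "det_on ?S F = det_on ?S (\<lambda>u w. \<Sum>v\<in>?S. F1 u v * F2 v w)"
    using prod by (rule det_on_cong)
  also have "\<dots> = det_on ?S F1 * det_on ?S F2" by (rule det_on_mult[OF fin])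
  also have "det_on ?S F1 = det_on S1 F1"
    by (rule det_on_pad[OF fin]) (auto simp: F1_def)
  also have "\<dots> = det_on S1 F" by (rule det_on_cong) (auto simp: F1_def)
  also have "det_on ?S F2 = det_on S2 F2"
    by (rule det_on_pad[OF fin]) (use disj in \<open>auto simp: F2_def\<close>)
  also have "\<dots> = det_on S2 F" by (rule det_on_cong) (auto simp: F2_def)
  finally show ?thesis .
qed

lemma det_on_blocks:
  assumes fK: "finite K" and fV: "\<And>k. k \<in> K \<Longrightarrow> finite (Vk k)"
    and z: "\<And>k k' u u'. k \<noteq> k' \<Longrightarrow> B (k, u) (k', u') = 0"
  shows "det_on (Sigma K Vk) B = (\<Prod>k\<in>K. det_on (Vk k) (\<lambda>u u'. B (k, u) (k, u')))"
  using fK fV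
proof (induction K rule: finite_induct)
  case empty
  then show ?case by (simp add: det_on_def)
next
  case (insert k K)
  have eq: "Sigma (insert k K) Vk = ({k} \<times> Vk k) \<union> Sigma K Vk" by auto
  have "det_on (Sigma (insert k K) Vk) B = det_on ({k} \<times> Vk k) B * det_on (Sigma K Vk) B"
    unfolding eq
  proof (rule det_on_block2)
    show "finite ({k} \<times> Vk k)" using insert by simp
    show "finite (Sigma K Vk)" using insert by auto
    show "({k} \<times> Vk k) \<inter> Sigma K Vk = {}" using insert by auto
  qed (use insert in \<open>auto intro!: z\<close>)
  also have "det_on ({k} \<times> Vk k) B = det_on (Vk k) (\<lambda>u u'. B (k, u) (k, u'))"
    by (rule det_on_reindex) (use insert in \<open>auto simp: bij_betw_def inj_on_def\<close>)
  also have "det_on (Sigma K Vk) B = (\<Prod>k\<in>K. det_on (Vk k) (\<lambda>u u'. B (k, u) (k, u')))"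
    using insert by simp
  finally show ?case using insert by simp
qed

lemma xm_alt: "xm M u v = (if u = v then [:0, 1:] else 0) - [:M u v:]"
  by (simp add: xm_def)

lemma charpoly_similar:
  assumes fin: "finite S"
    and comm: "\<And>u w. u \<in> S \<Longrightarrow> w \<in> S \<Longrightarrow> (\<Sum>v\<in>S. M u v * T v w) = (\<Sum>v\<in>S. T u v * B v w)"
    and inj: "\<And>l. (\<forall>u\<in>S. (\<Sum>v\<in>S. T u v * l v) = 0) \<Longrightarrow> (\<forall>v\<in>S. l v = 0)"
  shows "charpoly_on S M = charpoly_on S B"
proof -
  have dT: "det_on S T \<noteq> 0"
  proof
    assume "det_on S T = 0"
    from det_on_zero[OF fin this] obtain l where "\<exists>v\<in>S. l v \<noteq> 0"
      "\<forall>u\<in>S. (\<Sum>v\<in>S. T u v * l v) = 0" by blast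
    with inj show False by blast
  qed
  let ?TP = "\<lambda>u v. [:T u v:]"
  have c1: "(\<Sum>v\<in>S. xm M u v * ?TP v w) = [:0,1:] * [:T u w:] - [:\<Sum>v\<in>S. M u v * T v w:]"
    if "u \<in> S" for u w
  proof -
    have "(\<Sum>v\<in>S. xm M u v * ?TP v w) =
        (\<Sum>v\<in>S. (if u = v then [:0,1:] * [:T v w:] else 0)) - (\<Sum>v\<in>S. [:M u v * T v w:])"
      unfolding xm_alt sum_subtractf[symmetric] by (intro sum.cong refl) (auto simp: algebra_simps mult_to_poly)
    also have "\<dots> = [:0,1:] * [:T u w:] - [:\<Sum>v\<in>S. M u v * T v w:]"
      using that fin by (simp add: sum_to_poly)
    finally show ?thesis .
  qed
  have c2: "(\<Sum>v\<in>S. ?TP u v * xm B v w) = [:0,1:] * [:T u w:] - [:\<Sum>v\<in>S. T u v * B v w:]"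
    if "w \<in> S" for u w
  proof -
    have "(\<Sum>v\<in>S. ?TP u v * xm B v w) =
        (\<Sum>v\<in>S. (if v = w then [:0,1:] * [:T u v:] else 0)) - (\<Sum>v\<in>S. [:T u v * B v w:])"
      unfolding xm_alt sum_subtractf[symmetric] by (intro sum.cong refl) (auto simp: algebra_simps mult_to_poly)
    also have "\<dots> = [:0,1:] * [:T u w:] - [:\<Sum>v\<in>S. T u v * B v w:]"
      using that fin by (simp add: sum_to_poly)
    finally show ?thesis .
  qed
  have "det_on S (xm M) * [:det_on S T:] = det_on S (xm M) * det_on S ?TP"
    by (simp add: det_on_const_poly)
  also have "\<dots> = det_on S (\<lambda>u w. \<Sum>v\<in>S. xm M u v * ?TP v w)" by (rule det_on_mult[OF fin, symmetric])
  also have "\<dots> = det_on S (\<lambda>u w. \<Sum>v\<in>S. ?TP u v * xm B v w)"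
  proof (rule det_on_cong)
    fix u w assume u: "u \<in> S" and w: "w \<in> S"
    show "(\<Sum>v\<in>S. xm M u v * ?TP v w) = (\<Sum>v\<in>S. ?TP u v * xm B v w)"
      unfolding c1[OF u] c2[OF w] comm[OF u w] ..
  qed
  also have "\<dots> = det_on S ?TP * det_on S (xm B)" by (rule det_on_mult[OF fin])
  also have "\<dots> = det_on S (xm B) * [:det_on S T:]" by (simp add: det_on_const_poly)
  finally have "det_on S (xm M) * [:det_on S T:] = det_on S (xm B) * [:det_on S T:]" .
  moreover have "[:det_on S T:] \<noteq> 0" using dT by simp
  ultimately have "det_on S (xm M) = det_on S (xm B)"
    using mult_right_cancel[of "[:det_on S T:]" "det_on S (xm M)" "det_on S (xm B)"] by blast
  thus ?thesis by (simp add: charpoly_det_on)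
qed

lemma charpoly_reindex:
  assumes bij: "bij_betw h S' S" and fin: "finite S'"
  shows "charpoly_on S M = charpoly_on S' (\<lambda>a b. M (h a) (h b))"
proof -
  have inj: "inj_on h S'" using bij_betw_imp_inj_on[OF bij] .
  show ?thesis unfolding charpoly_det_on
    by (subst det_on_reindex[OF bij fin], rule det_on_cong)
       (use inj in \<open>auto simp: xm_def inj_on_def\<close>)
qed

lemma charpoly_nonzero:
  assumes fin: "finite S"
  shows "charpoly_on S M \<noteq> 0"
proof -
  obtain e where e: "bij_betw e {0..<card S} S" using ex_bij_betw_nat_finite[OF fin] by blast
  let ?n = "card S"
  let ?A = "mat ?n ?n (\<lambda>(i,j). M (e i) (e j))"
  have "charpoly_on S M = det_on {0..<?n} (xm (\<lambda>i j. M (e i) (e j)))"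
    by (subst charpoly_reindex[OF e], simp, simp add: charpoly_det_on)
  also have "\<dots> = char_poly ?A"
    unfolding det_on_jnf char_poly_def char_poly_matrix_def
    by (rule arg_cong[where f=det]) (auto simp: xm_def)
  finally have "charpoly_on S M = char_poly ?A" .
  moreover have "coeff (char_poly ?A) ?n = 1" using degree_monic_char_poly[of ?A ?n] by simp
  ultimately show ?thesis by auto
qed

definition avg :: "'c set \<Rightarrow> ('c \<Rightarrow> complex) \<Rightarrow> complex" where
  "avg B f = (\<Sum>c\<in>B. f c) / of_nat (card B)"

lemma avg_const:
  assumes "finite B" "c \<in> B" "\<And>c'. c' \<in> B \<Longrightarrow> f c' = f c"
  shows "avg B f = f c"
proof -
  have "(\<Sum>c'\<in>B. f c') = of_nat (card B) * f c" using assms(3) by simp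
  moreover have "card B \<noteq> 0" using assms(1,2) by auto
  ultimately show ?thesis by (simp add: avg_def)
qed

lemma sum_Sigma':
  assumes "finite A" "\<And>a. a \<in> A \<Longrightarrow> finite (B a)"
  shows "(\<Sum>x\<in>Sigma A B. g x) = (\<Sum>a\<in>A. \<Sum>b\<in>B a. g (a, b))"
  using assms by (subst sum.Sigma) auto

definition LX :: "('v \<Rightarrow> 'v \<Rightarrow> complex) \<Rightarrow> 'v \<times> 'c set \<Rightarrow> 'v \<times> 'c set \<Rightarrow> complex" where
  "LX N x y = (if x = y then 1 else 0)
      - N (fst x) (fst y) * of_nat (card (snd x \<inter> snd y)) / of_nat (card (snd x))"

lemma partition_charpoly:
  fixes N :: "'v \<Rightarrow> 'v \<Rightarrow> complex" and P :: "'v \<Rightarrow> 'c set set"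
    and Vk :: "'k \<Rightarrow> 'v set" and b :: "'k \<Rightarrow> 'c \<Rightarrow> complex"
  assumes fV: "finite V" and fC: "finite C" and fK: "finite K"
    and blk_sub: "\<And>v B. v \<in> V \<Longrightarrow> B \<in> P v \<Longrightarrow> B \<subseteq> C"
    and cover: "\<And>v c. v \<in> V \<Longrightarrow> c \<in> C \<Longrightarrow> \<exists>B\<in>P v. c \<in> B"
    and disj: "\<And>v B B' c. v \<in> V \<Longrightarrow> B \<in> P v \<Longrightarrow> B' \<in> P v \<Longrightarrow> c \<in> B \<Longrightarrow> c \<in> B' \<Longrightarrow> B = B'"
    and Vk_sub: "\<And>k. k \<in> K \<Longrightarrow> Vk k \<subseteq> V"
    and const: "\<And>k u B c c'. k \<in> K \<Longrightarrow> u \<in> Vk k \<Longrightarrow> B \<in> P u \<Longrightarrow> c \<in> B \<Longrightarrow> c' \<in> B \<Longrightarrow> b k c = b k c'"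
    and zero: "\<And>k v B. k \<in> K \<Longrightarrow> v \<in> V \<Longrightarrow> v \<notin> Vk k \<Longrightarrow> B \<in> P v \<Longrightarrow> (\<Sum>c\<in>B. b k c) = 0"
    and indep: "\<And>\<mu>. \<forall>c\<in>C. (\<Sum>k\<in>K. \<mu> k * b k c) = 0 \<Longrightarrow> \<forall>k\<in>K. \<mu> k = 0"
    and card: "card (Sigma V P) = card (Sigma K Vk)"
  shows "charpoly_on (Sigma V P) (LX N)
      = (\<Prod>k\<in>K. charpoly_on (Vk k) (\<lambda>v u. (if v = u then 1 else 0) - N v u))"
proof -
  let ?X = "Sigma V P" and ?Y = "Sigma K Vk"
  have fP: "finite (P v)" if "v \<in> V" for v
  proof -
    have "P v \<subseteq> Pow C" using blk_sub[OF that] by blast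
    thus ?thesis using fC finite_subset by blast
  qed
  have fB: "finite B" if "v \<in> V" "B \<in> P v" for v B using blk_sub[OF that] fC finite_subset by blast
  have fVk: "finite (Vk k)" if "k \<in> K" for k using Vk_sub[OF that] fV finite_subset by blast
  have fX: "finite ?X" using fV fP by auto
  have fY: "finite ?Y" using fK fVk by auto
  define BY :: "'k \<times> 'v \<Rightarrow> 'k \<times> 'v \<Rightarrow> complex" where "BY = (\<lambda>y y'. if fst y = fst y' then
      (if snd y = snd y' then 1 else 0) - N (snd y) (snd y') else (0::complex))"
  define T :: "'v \<times> 'c set \<Rightarrow> 'k \<times> 'v \<Rightarrow> complex" where "T = (\<lambda>x y. if fst x = snd y then avg (snd x) (b (fst y)) else 0)"
  have stepA: "charpoly_on ?Y BY = (\<Prod>k\<in>K. charpoly_on (Vk k) (\<lambda>v u. (if v = u then 1 else 0) - N v u))"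
    unfolding charpoly_det_on
    by (subst det_on_blocks[OF fK fVk]) (auto simp: xm_def BY_def intro!: prod.cong det_on_cong)
  have key: "(\<Sum>x'\<in>?X. LX N x x' * T x' z) = (\<Sum>y\<in>?Y. T x y * BY y z)"
    if x: "x \<in> ?X" and z: "z \<in> ?Y" for x z
  proof -
    obtain v B where xvB: "x = (v, B)" and v: "v \<in> V" and B: "B \<in> P v" using x by auto
    obtain k u where zku: "z = (k, u)" and k: "k \<in> K" and u: "u \<in> Vk k" using z by auto
    have uV: "u \<in> V" using Vk_sub[OF k] u by blast
    have "(\<Sum>x'\<in>?X. LX N x x' * T x' z) = (\<Sum>w\<in>V. \<Sum>B'\<in>P w. LX N (v,B) (w,B') * T (w,B') (k,u))"
      unfolding xvB zku by (rule sum_Sigma'[OF fV fP])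
    also have "\<dots> = (\<Sum>B'\<in>P u. LX N (v,B) (u,B') * avg B' (b k))"
      using uV fV by (subst sum.remove[of _ u]) (auto simp: T_def intro!: sum.neutral)
    also have "\<dots> = (\<Sum>B'\<in>P u. (if (v,B) = (u,B') then avg B' (b k) else 0))
        - N v u / of_nat (card B) * (\<Sum>B'\<in>P u. of_nat (card (B \<inter> B')) * avg B' (b k))"
    proof -
      have "\<And>B'. LX N (v,B) (u,B') * avg B' (b k) = (if (v,B) = (u,B') then avg B' (b k) else 0)
        - N v u / of_nat (card B) * (of_nat (card (B \<inter> B')) * avg B' (b k))"
        unfolding LX_def by (simp add: divide_inverse algebra_simps)
      thus ?thesis by (simp add: sum_subtractf sum_distrib_left)
    qed
    also have "(\<Sum>B'\<in>P u. (if (v,B) = (u,B') then avg B' (b k) else 0)) = (if v = u then avg B (b k) else 0)"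
      using B fP[OF uV] by (cases "v = u") (auto simp: if_distrib cong: if_cong)
    also have "(\<Sum>B'\<in>P u. of_nat (card (B \<inter> B')) * avg B' (b k)) = (\<Sum>B'\<in>P u. \<Sum>c\<in>B \<inter> B'. b k c)"
    proof (intro sum.cong refl)
      fix B' assume B': "B' \<in> P u"
      have "(\<Sum>c\<in>B \<inter> B'. b k c) = (\<Sum>c\<in>B \<inter> B'. avg B' (b k))"
      proof (intro sum.cong refl)
        fix c assume c: "c \<in> B \<inter> B'"
        show "b k c = avg B' (b k)"
        proof (rule avg_const[OF fB[OF uV B'], symmetric])
          show "c \<in> B'" using c by blast
          fix c' assume c': "c' \<in> B'"
          show "b k c' = b k c" using const[OF k u B' c', of c] c by blast
        qed
      qed
      thus "of_nat (card (B \<inter> B')) * avg B' (b k) = (\<Sum>c\<in>B \<inter> B'. b k c)" by simp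
    qed
    also have "\<dots> = (\<Sum>c\<in>B. b k c)"
    proof -
      have "(\<Sum>B'\<in>P u. \<Sum>c\<in>B \<inter> B'. b k c) = (\<Sum>B'\<in>P u. \<Sum>c\<in>B. if c \<in> B' then b k c else 0)"
        by (rule sum.cong[OF refl], rule sum.inter_restrict[OF fB[OF v B]])
      also have "\<dots> = (\<Sum>c\<in>B. \<Sum>B'\<in>P u. if c \<in> B' then b k c else 0)" by (rule sum.swap)
      also have "\<dots> = (\<Sum>c\<in>B. b k c)"
      proof (intro sum.cong refl)
        fix c assume c: "c \<in> B"
        have cC: "c \<in> C" using blk_sub[OF v B] c by blast
        obtain B1 where B1: "B1 \<in> P u" "c \<in> B1" using cover[OF uV cC] by blast
        have "(\<Sum>B'\<in>P u. if c \<in> B' then b k c else 0) = (\<Sum>B'\<in>P u. if B' = B1 then b k c else 0)"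
        proof (rule sum.cong[OF refl])
          fix B' assume B': "B' \<in> P u"
          show "(if c \<in> B' then b k c else 0) = (if B' = B1 then b k c else 0)"
          proof (cases "c \<in> B'")
            case True
            hence "B' = B1" by (rule disj[OF uV B' B1(1) _ B1(2)])
            thus ?thesis using True by simp
          next
            case False
            hence "B' \<noteq> B1" using B1(2) by blast
            thus ?thesis using False by simp
          qed
        qed
        also have "\<dots> = b k c" using B1 fP[OF uV] by simp
        finally show "(\<Sum>B'\<in>P u. if c \<in> B' then b k c else 0) = b k c" .
      qed
      finally show ?thesis .
    qed
    finally have L: "(\<Sum>x'\<in>?X. LX N x x' * T x' z) =
        (if v = u then avg B (b k) else 0) - N v u * avg B (b k)"
      by (simp add: avg_def)
    have "(\<Sum>y\<in>?Y. T x y * BY y z) = (\<Sum>k'\<in>K. \<Sum>w\<in>Vk k'. T (v,B) (k',w) * BY (k',w) (k,u))"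
      unfolding xvB zku by (rule sum_Sigma'[OF fK fVk])
    also have "\<dots> = (\<Sum>w\<in>Vk k. T (v,B) (k,w) * BY (k,w) (k,u))"
      using k fK by (subst sum.remove[of _ k]) (auto simp: BY_def intro!: sum.neutral)
    also have "\<dots> = (if v \<in> Vk k then avg B (b k) * ((if v = u then 1 else 0) - N v u) else 0)"
    proof -
      have "\<And>w. T (v,B) (k,w) * BY (k,w) (k,u) =
          (if w = v then avg B (b k) * ((if v = u then 1 else 0) - N v u) else 0)"
        by (simp add: T_def BY_def)
      thus ?thesis using fVk[OF k] by simp
    qed
    finally have R: "(\<Sum>y\<in>?Y. T x y * BY y z) =
        (if v \<in> Vk k then avg B (b k) * ((if v = u then 1 else 0) - N v u) else 0)" .
    show ?thesis
    proof (cases "v \<in> Vk k")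
      case True
      thus ?thesis unfolding L R by (simp add: algebra_simps)
    next
      case False
      hence "v \<noteq> u" using u by blast
      moreover have "avg B (b k) = 0" using zero[OF k v False B] by (simp add: avg_def)
      ultimately show ?thesis unfolding L R using False by simp
    qed
  qed
  have injY: "\<forall>y\<in>?Y. l y = 0" if H: "\<forall>x\<in>?X. (\<Sum>y\<in>?Y. T x y * l y) = 0" for l
  proof
    fix y assume y: "y \<in> ?Y"
    obtain k0 u where yku: "y = (k0, u)" and k0: "k0 \<in> K" and u: "u \<in> Vk k0" using y by auto
    have uV: "u \<in> V" using Vk_sub[OF k0] u by blast
    define \<mu> where "\<mu> = (\<lambda>k. if u \<in> Vk k then l (k, u) else 0)"
    have "\<forall>c\<in>C. (\<Sum>k\<in>K. \<mu> k * b k c) = 0"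
    proof
      fix c assume c: "c \<in> C"
      obtain B where B: "B \<in> P u" "c \<in> B" using cover[OF uV c] by blast
      have "0 = (\<Sum>y\<in>?Y. T (u,B) y * l y)" using H B(1) uV by auto
      also have "\<dots> = (\<Sum>k\<in>K. \<Sum>w\<in>Vk k. T (u,B) (k,w) * l (k,w))" by (rule sum_Sigma'[OF fK fVk])
      also have "\<dots> = (\<Sum>k\<in>K. \<mu> k * b k c)"
      proof (intro sum.cong refl)
        fix k assume k: "k \<in> K"
        have "(\<Sum>w\<in>Vk k. T (u,B) (k,w) * l (k,w)) = (if u \<in> Vk k then avg B (b k) * l (k,u) else 0)"
        proof -
          have "\<And>w. T (u,B) (k,w) * l (k,w) = (if w = u then avg B (b k) * l (k,u) else 0)"
            by (simp add: T_def)
          thus ?thesis using fVk[OF k] by simp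
        qed
        also have "\<dots> = \<mu> k * b k c"
        proof (cases "u \<in> Vk k")
          case True
          have "avg B (b k) = b k c"
          proof (rule avg_const[OF fB[OF uV B(1)] B(2)])
            fix c' assume c': "c' \<in> B"
            show "b k c' = b k c" using const[OF k True B(1) c' B(2)] .
          qed
          thus ?thesis using True by (simp add: \<mu>_def)
        qed (simp add: \<mu>_def)
        finally show "(\<Sum>w\<in>Vk k. T (u,B) (k,w) * l (k,w)) = \<mu> k * b k c" .
      qed
      finally show "(\<Sum>k\<in>K. \<mu> k * b k c) = 0" by simp
    qed
    from indep[OF this] k0 have "\<mu> k0 = 0" by blast
    thus "l y = 0" using u by (simp add: \<mu>_def yku)
  qed
  obtain h where h: "bij_betw h ?X ?Y" using finite_same_card_bij[OF fX fY card] by blast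
  have hX: "h x \<in> ?Y" if "x \<in> ?X" for x using h that bij_betwE by blast
  have "charpoly_on ?X (LX N) = charpoly_on ?X (\<lambda>a a'. BY (h a) (h a'))"
  proof (rule charpoly_similar[OF fX, where T="\<lambda>x x'. T x (h x')"])
    fix x w assume x: "x \<in> ?X" and w: "w \<in> ?X"
    have "(\<Sum>v\<in>?X. LX N x v * T v (h w)) = (\<Sum>y\<in>?Y. T x y * BY y (h w))"
      by (rule key[OF x hX[OF w]])
    also have "\<dots> = (\<Sum>v\<in>?X. T x (h v) * BY (h v) (h w))"
      by (rule sum.reindex_bij_betw[OF h, symmetric])
    finally show "(\<Sum>v\<in>?X. LX N x v * T v (h w)) = (\<Sum>v\<in>?X. T x (h v) * BY (h v) (h w))" .
  next
    fix l assume H: "\<forall>u\<in>?X. (\<Sum>v\<in>?X. T u (h v) * l v) = 0"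
    let ?l = "\<lambda>y. l (inv_into ?X h y)"
    have "\<forall>x\<in>?X. (\<Sum>y\<in>?Y. T x y * ?l y) = 0"
    proof
      fix x assume x: "x \<in> ?X"
      have "(\<Sum>y\<in>?Y. T x y * ?l y) = (\<Sum>v\<in>?X. T x (h v) * ?l (h v))"
        by (rule sum.reindex_bij_betw[OF h, symmetric])
      also have "\<dots> = (\<Sum>v\<in>?X. T x (h v) * l v)"
        using h by (intro sum.cong refl) (simp add: bij_betw_inv_into_left)
      finally show "(\<Sum>y\<in>?Y. T x y * ?l y) = 0" using H x by simp
    qed
    from injY[OF this] have Z: "\<forall>y\<in>?Y. l (inv_into ?X h y) = 0" .
    show "\<forall>v\<in>?X. l v = 0"
    proof
      fix v assume v: "v \<in> ?X"
      have "l (inv_into ?X h (h v)) = 0" by (rule bspec[OF Z hX[OF v]])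
      thus "l v = 0" using bij_betw_inv_into_left[OF h v] by simp
    qed
  qed
  also have "\<dots> = charpoly_on ?Y BY" by (rule charpoly_reindex[OF h fX, symmetric])
  also have "\<dots> = (\<Prod>k\<in>K. charpoly_on (Vk k) (\<lambda>v u. (if v = u then 1 else 0) - N v u))" by (rule stepA)
  finally show ?thesis .
qed

lemma charpoly_cong:
  assumes "\<And>u v. u \<in> S \<Longrightarrow> v \<in> S \<Longrightarrow> M u v = M' u v"
  shows "charpoly_on S M = charpoly_on S M'"
  unfolding charpoly_det_on by (rule det_on_cong) (use assms in \<open>auto simp: xm_def\<close>)

locale cgraph =
  fixes G :: "('v, 'e) mgraph" and V0 V1 :: "'v set" and A :: "nat multiset"
  assumes mg: "magnetic_graph G" and V10: "V1 \<subseteq> V0" and V0V: "V0 \<subseteq> mg_V G"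
    and A0: "0 \<notin># A" and Ane: "A \<noteq> {#}"
begin

abbreviation "as \<equiv> sorted_list_of_multiset A"
abbreviation "s \<equiv> length as"
abbreviation "a i \<equiv> as ! i"
abbreviation "V \<equiv> mg_V G"

definition C :: "(nat \<times> nat) set" where "C = Sigma {..<s} (\<lambda>i. {..<a i})"

definition fr :: "nat \<Rightarrow> 'v \<Rightarrow> nat \<Rightarrow> ('v \<times> nat) set" where
  "fr i v j = frame_rel G V0 (a i) `` {(v, j)}"

definition blk :: "'v \<Rightarrow> nat \<times> nat \<Rightarrow> (nat \<times> nat) set" where
  "blk v c = (if v \<in> V1 then C else if v \<in> V0 then {(i', j'). i' = fst c \<and> j' < a (fst c)} else {c})"

definition Pv :: "'v \<Rightarrow> (nat \<times> nat) set set" where "Pv v = blk v ` C"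

definition phi :: "'v \<times> (nat \<times> nat) set \<Rightarrow> (('v \<times> nat) set \<times> nat) set" where
  "phi x = (\<lambda>(i, j). (fr i (fst x) j, i)) ` snd x"

lemma fin_V: "finite V" and fin_E: "finite (mg_E G)"
  and src_V: "e \<in> mg_E G \<Longrightarrow> mg_src G e \<in> V" and tgt_V: "e \<in> mg_E G \<Longrightarrow> mg_tgt G e \<in> V"
  using mg unfolding magnetic_graph_def by auto

lemma s_pos: "s > 0" using Ane by (cases A) auto

lemma a_pos: "i < s \<Longrightarrow> a i > 0"
proof -
  assume "i < s"
  hence "a i \<in> set as" by (rule nth_mem)
  hence "a i \<in># A" by (simp only: set_sorted_list_of_multiset)
  thus "a i > 0" using A0 by (metis gr0I)
qed

lemma C_mem: "(i, j) \<in> C \<longleftrightarrow> i < s \<and> j < a i" by (simp add: C_def)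

lemma fin_C: "finite C" by (simp add: C_def)

lemma fr_mem: "v \<in> V \<Longrightarrow> j < a i \<Longrightarrow> (w, l) \<in> fr i v j \<longleftrightarrow> w = v \<and> l < a i \<and> (v \<in> V0 \<or> l = j)"
  unfolding fr_def frame_rel_def using V0V by auto

lemma fr_eq: "v \<in> V \<Longrightarrow> v' \<in> V \<Longrightarrow> j < a i \<Longrightarrow> j' < a i \<Longrightarrow>
    fr i v j = fr i v' j' \<longleftrightarrow> v = v' \<and> (v \<in> V0 \<or> j = j')"
proof
  assume v: "v \<in> V" and v': "v' \<in> V" and j: "j < a i" and j': "j' < a i"
  assume eq: "fr i v j = fr i v' j'"
  have "(v, j) \<in> fr i v j" using fr_mem[OF v j] j by simp
  hence "(v, j) \<in> fr i v' j'" using eq by simp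
  hence vv: "v = v'" and "v' \<in> V0 \<or> j = j'" using fr_mem[OF v' j'] by auto
  thus "v = v' \<and> (v \<in> V0 \<or> j = j')" by simp
next
  assume v: "v \<in> V" and v': "v' \<in> V" and j: "j < a i" and j': "j' < a i"
  assume "v = v' \<and> (v \<in> V0 \<or> j = j')"
  thus "fr i v j = fr i v' j'" using fr_mem[OF v j] fr_mem[OF v' j'] by auto
qed

lemma fr_V0: "v \<in> V0 \<Longrightarrow> j < a i \<Longrightarrow> fr i v j = fr i v 0"
  using fr_eq[of v v j i 0] V0V by (auto intro: le_less_trans)

lemma frame_cls_fr: "frame_cls G V0 (a i) v = fr i v 0"
  by (simp add: frame_cls_def fr_def)

abbreviation "UV \<equiv> mg_V (A_union G V0 A)"

lemma UV_eq: "UV = {(fr i v j, i) | v i j. v \<in> V \<and> (i, j) \<in> C}"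
  unfolding A_union_def Let_def dunion_def frame_def contract_def copies_def
  by (auto simp: quotient_def fr_def C_mem)

lemma UV_mem: "v \<in> V \<Longrightarrow> (i, j) \<in> C \<Longrightarrow> (fr i v j, i) \<in> UV"
  unfolding UV_eq by blast

abbreviation "CR \<equiv> contr_rel G V0 A V1"

lemma CR_mem: "(p, q) \<in> CR \<longleftrightarrow> p \<in> UV \<and> q \<in> UV \<and>
   (p = q \<or> (\<exists>v1\<in>V1. fst p = fr (snd p) v1 0 \<and> fst q = fr (snd q) v1 0))"
  unfolding contr_rel_def Let_def frame_cls_fr by (cases p; cases q) auto

lemma blk_self: "c \<in> C \<Longrightarrow> c \<in> blk v c"
  by (cases c) (auto simp: blk_def C_mem)

lemma blk_sub: "c \<in> C \<Longrightarrow> blk v c \<subseteq> C"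
  by (cases c) (auto simp: blk_def C_mem)

lemma blk_part: "c \<in> C \<Longrightarrow> c' \<in> C \<Longrightarrow> c \<in> blk v c' \<Longrightarrow> blk v c = blk v c'"
  by (cases c; cases c') (auto simp: blk_def)

lemma CR_img:
  assumes v: "v \<in> V" and c: "(i, j) \<in> C"
  shows "CR `` {(fr i v j, i)} = phi (v, blk v (i, j))"
proof (cases "v \<in> V1")
  case True
  hence vV0: "v \<in> V0" using V10 by blast
  have "CR `` {(fr i v j, i)} = {(fr i' v 0, i') | i'. i' < s}"
  proof -
    have "q \<in> CR `` {(fr i v j, i)} \<longleftrightarrow> (\<exists>i'. i' < s \<and> q = (fr i' v 0, i'))" for q
    proof
      assume "q \<in> CR `` {(fr i v j, i)}"
      hence q: "((fr i v j, i), q) \<in> CR" by simp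
      hence qU: "q \<in> UV" by (simp add: CR_mem)
      then obtain w i' j' where qw: "q = (fr i' w j', i')" and w: "w \<in> V" and c': "(i', j') \<in> C"
        unfolding UV_eq by blast
      from q consider "(fr i v j, i) = q" | v1 where "v1 \<in> V1" "fr i v j = fr i v1 0" "fst q = fr (snd q) v1 0"
        by (auto simp: CR_mem)
      thus "\<exists>i'. i' < s \<and> q = (fr i' v 0, i')"
      proof cases
        case 1
        have "fr i v j = fr i v 0" using fr_V0[OF vV0, of j i] c by (simp add: C_mem)
        hence "q = (fr i v 0, i)" using 1 by simp
        moreover have "i < s" using c by (simp add: C_mem)
        ultimately show ?thesis by blast
      next
        case 2
        have v1: "v1 \<in> V" using 2(1) V10 V0V by blast
        have "v = v1" using 2(2) fr_eq[OF v v1] c a_pos by (auto simp: C_mem)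
        thus ?thesis using 2(3) qw c' by (auto simp: C_mem)
      qed
    next
      assume "\<exists>i'. i' < s \<and> q = (fr i' v 0, i')"
      then obtain i' where i': "i' < s" "q = (fr i' v 0, i')" by blast
      have "(i', 0) \<in> C" using i' a_pos by (simp add: C_mem)
      hence "q \<in> UV" using UV_mem[OF v] i' by simp
      moreover have "(fr i v j, i) \<in> UV" using UV_mem[OF v c] .
      ultimately have U: "q \<in> UV" "(fr i v j, i) \<in> UV" by blast+
      have eq: "fr i v j = fr i v 0" using fr_V0[OF vV0, of j i] c by (simp add: C_mem)
      have "((fr i v j, i), q) \<in> CR" unfolding CR_mem
      proof (intro conjI disjI2 bexI[of _ v])
        show "fst (fr i v j, i) = fr (snd (fr i v j, i)) v 0" using eq by simp
        show "fst q = fr (snd q) v 0" using i'(2) by simp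
      qed (use U True in auto)
      thus "q \<in> CR `` {(fr i v j, i)}" by simp
    qed
    thus ?thesis by blast
  qed
  also have "\<dots> = phi (v, blk v (i, j))"
  proof -
    have "phi (v, blk v (i, j)) = (\<lambda>(i, j). (fr i v j, i)) ` C" using True by (simp add: phi_def blk_def)
    also have "\<dots> = {(fr i' v 0, i') | i'. i' < s}"
    proof
      show "(\<lambda>(i, j). (fr i v j, i)) ` C \<subseteq> {(fr i' v 0, i') | i'. i' < s}"
      proof
        fix q assume "q \<in> (\<lambda>(i, j). (fr i v j, i)) ` C"
        then obtain c2 where c2': "c2 \<in> C" and q': "q = (\<lambda>(i, j). (fr i v j, i)) c2" by blast
        obtain i2 j2 where c2e: "c2 = (i2, j2)" by (cases c2)
        have c2: "(i2, j2) \<in> C" and q: "q = (fr i2 v j2, i2)" using c2' q' c2e by auto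
        have "fr i2 v j2 = fr i2 v 0" using fr_V0[OF vV0, of j2 i2] c2 by (simp add: C_mem)
        hence "q = (fr i2 v 0, i2)" using q by simp
        moreover have "i2 < s" using c2 by (simp add: C_mem)
        ultimately show "q \<in> {(fr i' v 0, i') | i'. i' < s}" by blast
      qed
      show "{(fr i' v 0, i') | i'. i' < s} \<subseteq> (\<lambda>(i, j). (fr i v j, i)) ` C"
      proof
        fix q assume "q \<in> {(fr i' v 0, i') | i'. i' < s}"
        then obtain i' where "i' < s" "q = (fr i' v 0, i')" by blast
        moreover have "(i', 0) \<in> C" using \<open>i' < s\<close> a_pos by (simp add: C_mem)
        ultimately show "q \<in> (\<lambda>(i, j). (fr i v j, i)) ` C" by force
      qed
    qed
    finally show ?thesis by simp
  qed
  finally show ?thesis .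
next
  case False
  have "CR `` {(fr i v j, i)} = {(fr i v j, i)}"
  proof -
    have "q \<in> CR `` {(fr i v j, i)} \<longleftrightarrow> q = (fr i v j, i)" for q
    proof
      assume "q \<in> CR `` {(fr i v j, i)}"
      hence q: "((fr i v j, i), q) \<in> CR" by simp
      from q consider "(fr i v j, i) = q" | v1 where "v1 \<in> V1" "fr i v j = fr i v1 0"
        by (auto simp: CR_mem)
      thus "q = (fr i v j, i)"
      proof cases
        case 2
        have v1: "v1 \<in> V" using 2(1) V10 V0V by blast
        have "v = v1" using 2(2) fr_eq[OF v v1] c a_pos by (auto simp: C_mem)
        thus ?thesis using False 2(1) by simp
      qed simp
    next
      assume "q = (fr i v j, i)"
      thus "q \<in> CR `` {(fr i v j, i)}" using UV_mem[OF v c] by (simp add: CR_mem)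
    qed
    thus ?thesis by blast
  qed
  also have "\<dots> = phi (v, blk v (i, j))"
  proof (cases "v \<in> V0")
    case True
    have "blk v (i, j) = (\<lambda>j'. (i, j')) ` {..<a i}" using False True by (auto simp: blk_def)
    hence "phi (v, blk v (i, j)) = (\<lambda>(i, j). (fr i v j, i)) ` ((\<lambda>j'. (i, j')) ` {..<a i})"
      by (simp add: phi_def)
    also have "\<dots> = (\<lambda>j'. (fr i v j', i)) ` {..<a i}" by (simp add: image_image)
    also have "\<dots> = (\<lambda>j'. (fr i v j, i)) ` {..<a i}"
    proof (rule image_cong[OF refl])
      fix j' assume "j' \<in> {..<a i}"
      thus "(fr i v j', i) = (fr i v j, i)"
        using fr_V0[OF True, of j' i] fr_V0[OF True, of j i] c by (simp add: C_mem)
    qed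
    also have "\<dots> = {(fr i v j, i)}" using c by (auto simp: C_mem)
    finally show ?thesis by simp
  next
    case F0: False
    thus ?thesis using False by (simp add: phi_def blk_def)
  qed
  finally show ?thesis .
qed

abbreviation "H \<equiv> contracted_A_union G V0 A V1"
abbreviation "X \<equiv> Sigma V Pv"

lemma X_mem: "x \<in> X \<longleftrightarrow> (\<exists>v c. v \<in> V \<and> c \<in> C \<and> x = (v, blk v c))"
proof
  assume "x \<in> X"
  then obtain v B where x: "x = (v, B)" and v: "v \<in> V" and B: "B \<in> Pv v" by blast
  from B obtain c where "c \<in> C" "B = blk v c" unfolding Pv_def by blast
  thus "\<exists>v c. v \<in> V \<and> c \<in> C \<and> x = (v, blk v c)" using x v by blast
next
  assume "\<exists>v c. v \<in> V \<and> c \<in> C \<and> x = (v, blk v c)"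
  then obtain v c where "v \<in> V" "c \<in> C" "x = (v, blk v c)" by blast
  thus "x \<in> X" unfolding Pv_def by blast
qed

lemma HV_eq: "mg_V H = phi ` X"
proof -
  have "mg_V H = UV // CR" by (simp add: contracted_A_union_def contract_def)
  also have "\<dots> = {CR `` {p} | p. p \<in> UV}" by (auto simp: quotient_def)
  also have "\<dots> = {phi (v, blk v c) | v c. v \<in> V \<and> c \<in> C}"
  proof -
    have "z \<in> {phi (v, blk v c) | v c. v \<in> V \<and> c \<in> C}" if "z \<in> {CR `` {p} | p. p \<in> UV}" for z
    proof -
    from that obtain p where zp: "z = CR `` {p}" and p: "p \<in> UV" by blast
    then obtain v i j where "p = (fr i v j, i)" "v \<in> V" "(i, j) \<in> C" unfolding UV_eq by blast
    hence "z = phi (v, blk v (i, j))" using CR_img zp by simp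
    thus "z \<in> {phi (v, blk v c) | v c. v \<in> V \<and> c \<in> C}" using \<open>v \<in> V\<close> \<open>(i, j) \<in> C\<close> by blast
    qed
    moreover have "z \<in> {CR `` {p} | p. p \<in> UV}" if "z \<in> {phi (v, blk v c) | v c. v \<in> V \<and> c \<in> C}" for z
    proof -
    from that obtain v c where zc: "z = phi (v, blk v c)" and v: "v \<in> V" and c: "c \<in> C" by blast
    obtain i j where cij: "c = (i, j)" by (cases c)
    have "z = CR `` {(fr i v j, i)}" using CR_img[OF v] c zc cij by simp
    moreover have "(fr i v j, i) \<in> UV" using UV_mem[OF v] c cij by simp
    ultimately show "z \<in> {CR `` {p} | p. p \<in> UV}" by blast
    qed
    ultimately show ?thesis by blast
  qed
  also have "\<dots> = phi ` X"
  proof -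
    have "z \<in> phi ` X" if "z \<in> {phi (v, blk v c) | v c. v \<in> V \<and> c \<in> C}" for z
    proof -
      from that obtain v c where "z = phi (v, blk v c)" "v \<in> V" "c \<in> C" by blast
      moreover have "(v, blk v c) \<in> X" using X_mem \<open>v \<in> V\<close> \<open>c \<in> C\<close> by blast
      ultimately show ?thesis by blast
    qed
    moreover have "z \<in> {phi (v, blk v c) | v c. v \<in> V \<and> c \<in> C}" if "z \<in> phi ` X" for z
    proof -
      from that obtain x where "z = phi x" "x \<in> X" by blast
      moreover from \<open>x \<in> X\<close> obtain v c where "v \<in> V" "c \<in> C" "x = (v, blk v c)"
        unfolding X_mem by blast
      ultimately show ?thesis by blast
    qed
    ultimately show ?thesis by blast
  qed
  finally show ?thesis .
qed

lemma phi_inj: "inj_on phi X"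
proof
  fix x y assume x: "x \<in> X" and y: "y \<in> X" and eq: "phi x = phi y"
  obtain v c where v: "v \<in> V" and c: "c \<in> C" and xv: "x = (v, blk v c)" using x X_mem by blast
  obtain v' c' where v': "v' \<in> V" and c': "c' \<in> C" and yv: "y = (v', blk v' c')" using y X_mem by blast
  obtain i j where cij: "c = (i, j)" by (cases c)
  obtain i' j' where cij': "c' = (i', j')" by (cases c')
  have "(fr i v j, i) \<in> phi x" unfolding xv phi_def using blk_self[OF c] cij by force
  hence "(fr i v j, i) \<in> phi y" using eq by simp
  then obtain i2 j2 where m: "(i2, j2) \<in> blk v' c'" "fr i v j = fr i2 v' j2" "i = i2"
    unfolding yv phi_def by auto
  have c2: "(i2, j2) \<in> C" using m(1) blk_sub[OF c'] by blast
  have vv: "v = v'" and jj: "v \<in> V0 \<or> j = j2"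
    using m(2) fr_eq[OF v v', of j i j2] c c2 m(3) by (auto simp: C_mem cij)
  have "blk v c = blk v (i2, j2)"
  proof (cases "v \<in> V0")
    case True thus ?thesis using m(3) by (auto simp: blk_def cij)
  next
    case False thus ?thesis using m(3) jj by (simp add: cij)
  qed
  also have "\<dots> = blk v c'" using blk_part[OF c2 c'] m(1) vv by simp
  finally show "x = y" using xv yv vv by simp
qed

lemma phi_bij: "bij_betw phi X (mg_V H)"
  using phi_inj HV_eq by (simp add: bij_betw_def)


definition Nmat :: "'v \<Rightarrow> 'v \<Rightarrow> complex" where
  "Nmat v u = (\<Sum>e\<in>{e\<in>out_edges G v. mg_tgt G e = u}.
      complex_of_real (mg_w G e) * exp (\<i> * complex_of_real (mg_alpha G e))) / complex_of_real (wdeg G v)"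

lemma lap_G: "lap G v u = (if v = u then 1 else 0) - Nmat v u"
  by (simp add: lap_def Nmat_def)

definition emb :: "'e \<times> nat \<times> nat \<Rightarrow> ('e \<times> nat) \<times> nat" where
  "emb p = ((fst p, snd (snd p)), fst (snd p))"

lemma emb_inj: "inj emb"
  by (auto simp: inj_def emb_def prod_eq_iff)

lemma HE: "mg_E H = emb ` (mg_E G \<times> C)"
proof -
  have "mg_E H = {(ej, i). i < s \<and> ej \<in> mg_E G \<times> {..<a i}}"
    by (simp add: contracted_A_union_def contract_def A_union_def Let_def dunion_def frame_def copies_def)
  also have "\<dots> = emb ` (mg_E G \<times> C)"
  proof -
    have "p \<in> {(ej, i). i < s \<and> ej \<in> mg_E G \<times> {..<a i}} \<longleftrightarrow> p \<in> emb ` (mg_E G \<times> C)" for p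
    proof
      assume "p \<in> {(ej, i). i < s \<and> ej \<in> mg_E G \<times> {..<a i}}"
      then obtain e j i where p: "p = ((e, j), i)" and "i < s" "e \<in> mg_E G" "j < a i" by auto
      hence "(e, (i, j)) \<in> mg_E G \<times> C" by (simp add: C_mem)
      moreover have "p = emb (e, (i, j))" using p by (simp add: emb_def)
      ultimately show "p \<in> emb ` (mg_E G \<times> C)" by blast
    next
      assume "p \<in> emb ` (mg_E G \<times> C)"
      then obtain e i j where "p = emb (e, (i, j))" "e \<in> mg_E G" "(i, j) \<in> C" by auto
      thus "p \<in> {(ej, i). i < s \<and> ej \<in> mg_E G \<times> {..<a i}}" by (simp add: emb_def C_mem)
    qed
    thus ?thesis by blast
  qed
  finally show ?thesis .
qed

lemma Hsrc: "e \<in> mg_E G \<Longrightarrow> (i, j) \<in> C \<Longrightarrow>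
    mg_src H (emb (e, (i, j))) = phi (mg_src G e, blk (mg_src G e) (i, j))"
proof -
  assume e: "e \<in> mg_E G" and c: "(i, j) \<in> C"
  have "mg_src H (emb (e, (i, j))) = CR `` {(fr i (mg_src G e) j, i)}"
    by (simp add: contracted_A_union_def contract_def A_union_def Let_def dunion_def frame_def
        copies_def emb_def fr_def)
  also have "\<dots> = phi (mg_src G e, blk (mg_src G e) (i, j))" by (rule CR_img[OF src_V[OF e] c])
  finally show ?thesis .
qed

lemma Htgt: "e \<in> mg_E G \<Longrightarrow> (i, j) \<in> C \<Longrightarrow>
    mg_tgt H (emb (e, (i, j))) = phi (mg_tgt G e, blk (mg_tgt G e) (i, j))"
proof -
  assume e: "e \<in> mg_E G" and c: "(i, j) \<in> C"
  have "mg_tgt H (emb (e, (i, j))) = CR `` {(fr i (mg_tgt G e) j, i)}"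
    by (simp add: contracted_A_union_def contract_def A_union_def Let_def dunion_def frame_def
        copies_def emb_def fr_def)
  also have "\<dots> = phi (mg_tgt G e, blk (mg_tgt G e) (i, j))" by (rule CR_img[OF tgt_V[OF e] c])
  finally show ?thesis .
qed

lemma Hw: "mg_w H (emb (e, c)) = mg_w G e" and Halpha: "mg_alpha H (emb (e, c)) = mg_alpha G e"
  by (simp_all add: contracted_A_union_def contract_def A_union_def Let_def dunion_def frame_def
        copies_def emb_def)

lemma blk_in_iff: "c \<in> C \<Longrightarrow> B \<in> Pv v \<Longrightarrow> blk v c = B \<longleftrightarrow> c \<in> B"
proof
  assume "c \<in> C" "B \<in> Pv v" "blk v c = B"
  thus "c \<in> B" using blk_self by blast
next
  assume c: "c \<in> C" and B: "B \<in> Pv v" and cB: "c \<in> B"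
  from B obtain c' where c': "c' \<in> C" "B = blk v c'" unfolding Pv_def by blast
  thus "blk v c = B" using blk_part[OF c c'(1)] cB by simp
qed

lemma X_blk: "v \<in> V \<Longrightarrow> c \<in> C \<Longrightarrow> (v, blk v c) \<in> X"
  using X_mem by blast

lemma phi_eq_iff: "x \<in> X \<Longrightarrow> y \<in> X \<Longrightarrow> phi x = phi y \<longleftrightarrow> x = y"
  using phi_inj by (auto simp: inj_on_def)

lemma src_match:
  assumes e: "e \<in> mg_E G" and c: "c \<in> C" and v: "v \<in> V" and B: "B \<in> Pv v"
  shows "phi (mg_src G e, blk (mg_src G e) c) = phi (v, B) \<longleftrightarrow> mg_src G e = v \<and> c \<in> B"
proof -
  have "(v, B) \<in> X" using v B by simp
  moreover have "(mg_src G e, blk (mg_src G e) c) \<in> X" using X_blk[OF src_V[OF e] c] .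
  ultimately have "phi (mg_src G e, blk (mg_src G e) c) = phi (v, B) \<longleftrightarrow>
      mg_src G e = v \<and> blk v c = B" using phi_eq_iff by auto
  thus ?thesis using blk_in_iff[OF c B] by auto
qed

lemma tgt_match:
  assumes e: "e \<in> mg_E G" and c: "c \<in> C" and v: "v \<in> V" and B: "B \<in> Pv v"
  shows "phi (mg_tgt G e, blk (mg_tgt G e) c) = phi (v, B) \<longleftrightarrow> mg_tgt G e = v \<and> c \<in> B"
proof -
  have "(v, B) \<in> X" using v B by simp
  moreover have "(mg_tgt G e, blk (mg_tgt G e) c) \<in> X" using X_blk[OF tgt_V[OF e] c] .
  ultimately have "phi (mg_tgt G e, blk (mg_tgt G e) c) = phi (v, B) \<longleftrightarrow>
      mg_tgt G e = v \<and> blk v c = B" using phi_eq_iff by auto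
  thus ?thesis using blk_in_iff[OF c B] by auto
qed

lemma Hout_tgt:
  assumes v: "v \<in> V" and B: "B \<in> Pv v" and u: "u \<in> V" and B': "B' \<in> Pv u"
  shows "{\<epsilon> \<in> out_edges H (phi (v, B)). mg_tgt H \<epsilon> = phi (u, B')} =
      emb ` ({e \<in> out_edges G v. mg_tgt G e = u} \<times> (B \<inter> B'))"
proof -
  have BC: "B \<subseteq> C" using B blk_sub unfolding Pv_def by blast
  have "\<epsilon> \<in> {\<epsilon> \<in> out_edges H (phi (v, B)). mg_tgt H \<epsilon> = phi (u, B')} \<longleftrightarrow>
      \<epsilon> \<in> emb ` ({e \<in> out_edges G v. mg_tgt G e = u} \<times> (B \<inter> B'))" for \<epsilon>
  proof
    assume "\<epsilon> \<in> {\<epsilon> \<in> out_edges H (phi (v, B)). mg_tgt H \<epsilon> = phi (u, B')}"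
    hence E: "\<epsilon> \<in> mg_E H" and S: "mg_src H \<epsilon> = phi (v, B)" and T: "mg_tgt H \<epsilon> = phi (u, B')"
      by (auto simp: out_edges_def)
    from E obtain e i j where eps: "\<epsilon> = emb (e, (i, j))" and e: "e \<in> mg_E G" and c: "(i, j) \<in> C"
      unfolding HE by auto
    have "mg_src G e = v \<and> (i, j) \<in> B" using S Hsrc[OF e c] src_match[OF e c v B] eps by simp
    moreover have "mg_tgt G e = u \<and> (i, j) \<in> B'" using T Htgt[OF e c] tgt_match[OF e c u B'] eps by simp
    ultimately show "\<epsilon> \<in> emb ` ({e \<in> out_edges G v. mg_tgt G e = u} \<times> (B \<inter> B'))"
      using e eps by (auto simp: out_edges_def)
  next
    assume "\<epsilon> \<in> emb ` ({e \<in> out_edges G v. mg_tgt G e = u} \<times> (B \<inter> B'))"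
    then obtain e i j where eps: "\<epsilon> = emb (e, (i, j))" and e: "e \<in> mg_E G" and
      se: "mg_src G e = v" and te: "mg_tgt G e = u" and cB: "(i, j) \<in> B" and cB': "(i, j) \<in> B'"
      by (auto simp: out_edges_def)
    have c: "(i, j) \<in> C" using cB BC by blast
    have "\<epsilon> \<in> mg_E H" unfolding HE eps using e c by blast
    moreover have "mg_src H \<epsilon> = phi (v, B)" using Hsrc[OF e c] src_match[OF e c v B] eps se cB by simp
    moreover have "mg_tgt H \<epsilon> = phi (u, B')" using Htgt[OF e c] tgt_match[OF e c u B'] eps te cB' by simp
    ultimately show "\<epsilon> \<in> {\<epsilon> \<in> out_edges H (phi (v, B)). mg_tgt H \<epsilon> = phi (u, B')}"
      by (simp add: out_edges_def)
  qed
  thus ?thesis by blast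
qed

lemma Hout:
  assumes v: "v \<in> V" and B: "B \<in> Pv v"
  shows "out_edges H (phi (v, B)) = emb ` (out_edges G v \<times> B)"
proof -
  have BC: "B \<subseteq> C" using B blk_sub unfolding Pv_def by blast
  have "\<epsilon> \<in> out_edges H (phi (v, B)) \<longleftrightarrow> \<epsilon> \<in> emb ` (out_edges G v \<times> B)" for \<epsilon>
  proof
    assume "\<epsilon> \<in> out_edges H (phi (v, B))"
    hence E: "\<epsilon> \<in> mg_E H" and S: "mg_src H \<epsilon> = phi (v, B)" by (auto simp: out_edges_def)
    from E obtain e i j where eps: "\<epsilon> = emb (e, (i, j))" and e: "e \<in> mg_E G" and c: "(i, j) \<in> C"
      unfolding HE by auto
    have "mg_src G e = v \<and> (i, j) \<in> B" using S Hsrc[OF e c] src_match[OF e c v B] eps by simp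
    thus "\<epsilon> \<in> emb ` (out_edges G v \<times> B)" using e eps by (auto simp: out_edges_def)
  next
    assume "\<epsilon> \<in> emb ` (out_edges G v \<times> B)"
    then obtain e i j where eps: "\<epsilon> = emb (e, (i, j))" and e: "e \<in> mg_E G" and
      se: "mg_src G e = v" and cB: "(i, j) \<in> B"
      by (auto simp: out_edges_def)
    have c: "(i, j) \<in> C" using cB BC by blast
    have "\<epsilon> \<in> mg_E H" unfolding HE eps using e c by blast
    moreover have "mg_src H \<epsilon> = phi (v, B)" using Hsrc[OF e c] src_match[OF e c v B] eps se cB by simp
    ultimately show "\<epsilon> \<in> out_edges H (phi (v, B))" by (simp add: out_edges_def)
  qed
  thus ?thesis by blast
qed

lemma sum_emb:
  assumes "finite S" "finite T"
  shows "(\<Sum>\<epsilon>\<in>emb ` (S \<times> T). f (mg_w H \<epsilon>) (mg_alpha H \<epsilon>)) =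
      of_nat (card T) * (\<Sum>e\<in>S. f (mg_w G e) (mg_alpha G e))"
proof -
  have "(\<Sum>\<epsilon>\<in>emb ` (S \<times> T). f (mg_w H \<epsilon>) (mg_alpha H \<epsilon>)) =
      (\<Sum>p\<in>S \<times> T. f (mg_w H (emb p)) (mg_alpha H (emb p)))"
    using sum.reindex[OF inj_on_subset[OF emb_inj subset_UNIV],
        of "\<lambda>\<epsilon>. f (mg_w H \<epsilon>) (mg_alpha H \<epsilon>)" "S \<times> T"] by (simp add: o_def)
  also have "\<dots> = (\<Sum>p\<in>S \<times> T. f (mg_w G (fst p)) (mg_alpha G (fst p)))"
    by (intro sum.cong refl) (metis Hw Halpha prod.collapse)
  also have "\<dots> = (\<Sum>e\<in>S. \<Sum>c\<in>T. f (mg_w G e) (mg_alpha G e))"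
    by (subst sum.cartesian_product) (simp add: case_prod_beta)
  also have "\<dots> = of_nat (card T) * (\<Sum>e\<in>S. f (mg_w G e) (mg_alpha G e))"
    by (simp add: sum_distrib_left)
  finally show ?thesis .
qed

lemma lap_H:
  assumes x: "x \<in> X" and y: "y \<in> X"
  shows "lap H (phi x) (phi y) = LX Nmat x y"
proof -
  obtain v B where xv: "x = (v, B)" and v: "v \<in> V" and B: "B \<in> Pv v" using x by auto
  obtain u B' where yu: "y = (u, B')" and u: "u \<in> V" and B': "B' \<in> Pv u" using y by auto
  have fB: "finite B" using B blk_sub fin_C finite_subset unfolding Pv_def by blast
  have fE: "finite {e \<in> out_edges G v. mg_tgt G e = u}" "finite (out_edges G v)"
    using fin_E by (auto simp: out_edges_def)
  let ?SG = "\<Sum>e\<in>{e\<in>out_edges G v. mg_tgt G e = u}.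
      complex_of_real (mg_w G e) * exp (\<i> * complex_of_real (mg_alpha G e))"
  have SH: "(\<Sum>\<epsilon>\<in>{\<epsilon>\<in>out_edges H (phi (v, B)). mg_tgt H \<epsilon> = phi (u, B')}.
      complex_of_real (mg_w H \<epsilon>) * exp (\<i> * complex_of_real (mg_alpha H \<epsilon>)))
      = of_nat (card (B \<inter> B')) * ?SG"
    unfolding Hout_tgt[OF v B u B']
    by (rule sum_emb[where f="\<lambda>w al. complex_of_real w * exp (\<i> * complex_of_real al)"])
       (use fE fB in auto)
  have WH: "wdeg H (phi (v, B)) = real (card B) * wdeg G v"
    unfolding wdeg_def Hout[OF v B]
    using sum_emb[OF fE(2) fB, where f="\<lambda>w al. w"] by simp
  have d: "(phi (v, B) = phi (u, B')) = ((v, B) = (u, B'))" using phi_eq_iff[OF x y] xv yu by simp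
  have ar: "complex_of_nat (card (B \<inter> B')) * ?SG / complex_of_real (real (card B) * wdeg G v)
      = ?SG / complex_of_real (wdeg G v) * of_nat (card (B \<inter> B')) / of_nat (card B)"
    by (simp add: divide_inverse inverse_mult_distrib mult_ac)
  show ?thesis
    unfolding xv yu lap_def LX_def SH WH d Nmat_def fst_conv snd_conv ar ..
qed

lemma charpoly_H: "charpoly_on (mg_V H) (lap H) = charpoly_on X (LX Nmat)"
proof -
  have fX: "finite X"
  proof -
    have "X \<subseteq> V \<times> Pow C" using blk_sub unfolding Pv_def by auto
    thus ?thesis using fin_V fin_C finite_subset by blast
  qed
  have "charpoly_on (mg_V H) (lap H) = charpoly_on X (\<lambda>x y. lap H (phi x) (phi y))"
    by (rule charpoly_reindex[OF phi_bij fX])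
  also have "\<dots> = charpoly_on X (LX Nmat)" by (rule charpoly_cong) (rule lap_H)
  finally show ?thesis .
qed


definition Vk :: "nat \<times> nat \<Rightarrow> 'v set" where
  "Vk k = (if k = (0, 0) then V else if snd k = 0 then V - V1 else V - V0)"

definition bb :: "nat \<times> nat \<Rightarrow> nat \<times> nat \<Rightarrow> complex" where
  "bb k c = (if k = (0, 0) then 1
     else if snd k = 0 then (if fst c = fst k then of_nat (a 0) else 0) - (if fst c = 0 then of_nat (a (fst k)) else 0)
     else (if c = k then 1 else 0) - (if c = (fst k, 0) then 1 else 0))"

definition Ci :: "nat \<Rightarrow> (nat \<times> nat) set" where "Ci i = (\<lambda>j. (i, j)) ` {..<a i}"

lemma blk_V0: "v \<in> V0 \<Longrightarrow> v \<notin> V1 \<Longrightarrow> blk v c = Ci (fst c)"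
  by (auto simp: blk_def Ci_def)

lemma blk_V1: "v \<in> V1 \<Longrightarrow> blk v c = C"
  by (simp add: blk_def)

lemma blk_nV0: "v \<notin> V0 \<Longrightarrow> blk v c = {c}"
  using V10 by (auto simp: blk_def)

lemma sum_Ci: "(\<Sum>c\<in>Ci i. f c) = (\<Sum>j<a i. f (i, j))"
  unfolding Ci_def by (subst sum.reindex) (auto simp: inj_on_def)

lemma sum_C: "(\<Sum>c\<in>C. f c) = (\<Sum>i<s. \<Sum>j<a i. f (i, j))"
  unfolding C_def by (rule sum_Sigma') auto

definition bsum :: "nat \<times> nat \<Rightarrow> nat \<Rightarrow> complex" where
  "bsum k i = (if k = (0, 0) then of_nat (a i)
      else if snd k = 0 then of_nat (a i) * ((if i = fst k then of_nat (a 0) else 0) - (if i = 0 then of_nat (a (fst k)) else 0))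
      else 0)"

lemma sum_bb_Ci:
  assumes k: "k \<in> C" and i: "i < s"
  shows "(\<Sum>c\<in>Ci i. bb k c) = bsum k i"
proof -
  have "(\<Sum>c\<in>Ci i. bb k c) = (\<Sum>j<a i. bb k (i, j))" by (rule sum_Ci)
  also have "\<dots> = bsum k i"
  proof (cases "k = (0, 0)")
    case True thus ?thesis by (simp add: bb_def bsum_def)
  next
    case False
    show ?thesis
    proof (cases "snd k = 0")
      case True thus ?thesis using False by (simp add: bb_def bsum_def)
    next
      case F2: False
      obtain i0 j0 where k0: "k = (i0, j0)" by (cases k)
      have j0: "j0 \<noteq> 0" using F2 k0 by simp
      have "(\<Sum>j<a i. bb k (i, j)) = (\<Sum>j<a i. (if j = j0 \<and> i = i0 then 1 else 0) - (if j = 0 \<and> i = i0 then 1 else 0))"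
        using F2 False k0 by (intro sum.cong refl) (auto simp: bb_def)
      also have "\<dots> = (\<Sum>j<a i. if j = j0 \<and> i = i0 then 1 else 0) - (\<Sum>j<a i. if j = 0 \<and> i = i0 then 1 else 0)"
        by (rule sum_subtractf)
      also have "(\<Sum>j<a i. if j = j0 \<and> i = i0 then 1 else (0::complex)) = (if i = i0 then 1 else 0)"
      proof (cases "i = i0")
        case True
        hence "j0 < a i" using k k0 by (simp add: C_mem)
        thus ?thesis using True by simp
      qed simp
      also have "(\<Sum>j<a i. if j = 0 \<and> i = i0 then 1 else (0::complex)) = (if i = i0 then 1 else 0)"
        using a_pos[OF i] by (cases "i = i0") simp_all
      finally show ?thesis using False F2 by (simp add: bsum_def)
    qed
  qed
  finally show ?thesis .
qed

lemma r_eq: "sum_mset A = (\<Sum>i<s. a i)"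
proof -
  have "sum_mset A = sum_mset (mset as)" by simp
  also have "\<dots> = sum_list as" by (rule sum_mset_sum_list)
  also have "\<dots> = (\<Sum>i<s. a i)" by (simp add: sum_list_sum_nth atLeast0LessThan)
  finally show ?thesis .
qed

lemma card_C: "card C = sum_mset A"
  unfolding r_eq C_def by (subst card_SigmaI) auto

lemma s_eq: "s = size A"
  by (metis mset_sorted_list_of_multiset size_mset)

lemma s_le_r: "s \<le> sum_mset A"
proof -
  have "(\<Sum>i<s. (1::nat)) \<le> (\<Sum>i<s. a i)" by (rule sum_mono) (use a_pos in \<open>auto simp: Suc_le_eq\<close>)
  thus ?thesis unfolding r_eq by simp
qed

lemma C00: "(0, 0) \<in> C" using s_pos a_pos by (simp add: C_mem)

lemma sum_bb_C:
  assumes k: "k \<in> C"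
  shows "(\<Sum>c\<in>C. bb k c) = (if k = (0, 0) then of_nat (sum_mset A) else 0)"
proof -
  have "(\<Sum>c\<in>C. bb k c) = (\<Sum>i<s. \<Sum>c\<in>Ci i. bb k c)" unfolding sum_C sum_Ci ..
  also have "\<dots> = (\<Sum>i<s. bsum k i)" using sum_bb_Ci[OF k] by simp
  also have "\<dots> = (if k = (0, 0) then of_nat (sum_mset A) else 0)"
  proof (cases "k = (0, 0)")
    case True thus ?thesis by (simp add: bsum_def r_eq)
  next
    case False
    show ?thesis
    proof (cases "snd k = 0")
      case F2: False thus ?thesis using False by (simp add: bsum_def)
    next
      case True
      have fk: "fst k < s" using k by (cases k) (simp add: C_mem)
      have "(\<Sum>i<s. bsum k i) = (\<Sum>i<s. (if i = fst k then of_nat (a i) * of_nat (a 0) else 0))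
          - (\<Sum>i<s. (if i = 0 then of_nat (a i) * of_nat (a (fst k)) else 0))"
        unfolding sum_subtractf[symmetric] using False True
        by (intro sum.cong refl) (auto simp: bsum_def algebra_simps)
      also have "\<dots> = 0" using fk s_pos by simp
      finally show ?thesis using False by simp
    qed
  qed
  finally show ?thesis .
qed

lemma fin_Pv: "finite (Pv v)" unfolding Pv_def using fin_C by simp

lemma Pv_sub: "B \<in> Pv v \<Longrightarrow> B \<subseteq> C" unfolding Pv_def using blk_sub by blast

lemma hyp_const:
  assumes k: "k \<in> C" and u: "u \<in> Vk k" and B: "B \<in> Pv u" and c: "c \<in> B" and c': "c' \<in> B"
  shows "bb k c = bb k c'"
proof -
  obtain c0 where c0: "c0 \<in> C" "B = blk u c0" using B unfolding Pv_def by blast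
  show ?thesis
  proof (cases "k = (0, 0)")
    case True thus ?thesis by (simp add: bb_def)
  next
    case False
    show ?thesis
    proof (cases "snd k = 0")
      case True
      hence uV1: "u \<notin> V1" using u False by (simp add: Vk_def)
      show ?thesis
      proof (cases "u \<in> V0")
        case True
        hence "B = Ci (fst c0)" using c0 blk_V0 uV1 by simp
        hence "fst c = fst c'" using c c' by (auto simp: Ci_def)
        thus ?thesis using False \<open>snd k = 0\<close> by (simp add: bb_def)
      next
        case F: False
        hence "B = {c0}" using c0 blk_nV0 by simp
        thus ?thesis using c c' by simp
      qed
    next
      case F2: False
      hence "u \<notin> V0" using u False by (simp add: Vk_def)
      hence "B = {c0}" using c0 blk_nV0 by simp
      thus ?thesis using c c' by simp
    qed
  qed
qed

lemma hyp_zero: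
  assumes k: "k \<in> C" and v: "v \<in> V" and nv: "v \<notin> Vk k" and B: "B \<in> Pv v"
  shows "(\<Sum>c\<in>B. bb k c) = 0"
proof -
  obtain c0 where c0: "c0 \<in> C" "B = blk v c0" using B unfolding Pv_def by blast
  have k00: "k \<noteq> (0, 0)" using nv v by (auto simp: Vk_def)
  show ?thesis
  proof (cases "snd k = 0")
    case True
    hence "v \<in> V1" using nv v k00 by (simp add: Vk_def)
    hence "B = C" using c0 blk_V1 by simp
    thus ?thesis using sum_bb_C[OF k] k00 by simp
  next
    case False
    hence vV0: "v \<in> V0" using nv v k00 by (simp add: Vk_def)
    show ?thesis
    proof (cases "v \<in> V1")
      case True
      hence "B = C" using c0 blk_V1 by simp
      thus ?thesis using sum_bb_C[OF k] k00 by simp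
    next
      case F: False
      hence "B = Ci (fst c0)" using c0 blk_V0 vV0 by simp
      moreover have "fst c0 < s" using c0 by (cases c0) (simp add: C_mem)
      ultimately show ?thesis using sum_bb_Ci[OF k] False k00 by (simp add: bsum_def)
    qed
  qed
qed

lemma hyp_indep:
  assumes H: "\<forall>c\<in>C. (\<Sum>k\<in>C. \<mu> k * bb k c) = 0"
  shows "\<forall>k\<in>C. \<mu> k = 0"
proof -
  have "0 = (\<Sum>c\<in>C. \<Sum>k\<in>C. \<mu> k * bb k c)" using H by simp
  also have "\<dots> = (\<Sum>k\<in>C. \<mu> k * (\<Sum>c\<in>C. bb k c))" unfolding sum_distrib_left by (rule sum.swap)
  also have "\<dots> = (\<Sum>k\<in>C. if k = (0, 0) then \<mu> k * of_nat (sum_mset A) else 0)"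
    by (intro sum.cong refl) (simp add: sum_bb_C)
  also have "\<dots> = \<mu> (0, 0) * of_nat (sum_mset A)" using C00 fin_C by simp
  finally have "\<mu> (0, 0) * of_nat (sum_mset A) = 0" by simp
  moreover have "sum_mset A \<noteq> 0" using s_le_r s_pos by linarith
  ultimately have m00: "\<mu> (0, 0) = 0" by (metis mult_eq_0_iff of_nat_eq_0_iff)
  have m1: "\<mu> (i0, 0) = 0" if i0: "0 < i0" "i0 < s" for i0
  proof -
    have "0 = (\<Sum>c\<in>Ci i0. \<Sum>k\<in>C. \<mu> k * bb k c)"
    proof -
      have "Ci i0 \<subseteq> C" using i0 by (auto simp: Ci_def C_mem)
      thus ?thesis using H by (intro sum.neutral[symmetric]) blast
    qed
    also have "\<dots> = (\<Sum>k\<in>C. \<mu> k * (\<Sum>c\<in>Ci i0. bb k c))"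
      unfolding sum_distrib_left by (rule sum.swap)
    also have "\<dots> = (\<Sum>k\<in>C. \<mu> k * bsum k i0)"
      by (intro sum.cong refl) (simp add: sum_bb_Ci i0(2))
    also have "\<dots> = (\<Sum>k\<in>C. if k = (i0, 0) then \<mu> (i0, 0) * (of_nat (a i0) * of_nat (a 0)) else 0)"
    proof (intro sum.cong refl)
      fix k assume k: "k \<in> C"
      show "\<mu> k * bsum k i0 = (if k = (i0, 0) then \<mu> (i0, 0) * (of_nat (a i0) * of_nat (a 0)) else 0)"
        using i0 m00 by (cases k) (auto simp: bsum_def)
    qed
    also have "\<dots> = \<mu> (i0, 0) * (of_nat (a i0) * of_nat (a 0))"
      using fin_C i0 a_pos by (simp add: C_mem)
    finally show ?thesis using a_pos[OF i0(2)] a_pos[OF s_pos] by simp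
  qed
  have m2: "\<mu> (i0, j0) = 0" if c: "(i0, j0) \<in> C" and j0: "j0 \<noteq> 0" for i0 j0
  proof -
    have "0 = (\<Sum>k\<in>C. \<mu> k * bb k (i0, j0))" using H c by simp
    also have "\<dots> = (\<Sum>k\<in>C. if k = (i0, j0) then \<mu> (i0, j0) else 0)"
    proof (intro sum.cong refl)
      fix k assume k: "k \<in> C"
      obtain i j where kij: "k = (i, j)" by (cases k)
      show "\<mu> k * bb k (i0, j0) = (if k = (i0, j0) then \<mu> (i0, j0) else 0)"
      proof (cases "k = (0, 0)")
        case True thus ?thesis using m00 j0 by auto
      next
        case False
        show ?thesis
        proof (cases "j = 0")
          case True
          hence "0 < i" using False kij by simp
          moreover have "i < s" using k kij by (simp add: C_mem)
          ultimately have "\<mu> k = 0" using m1 kij True by simp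
          thus ?thesis using True j0 kij by simp
        next
          case F: False
          thus ?thesis using False kij j0 by (auto simp: bb_def)
        qed
      qed
    qed
    also have "\<dots> = \<mu> (i0, j0)" using c fin_C by simp
    finally show ?thesis by simp
  qed
  show ?thesis
  proof
    fix k assume k: "k \<in> C"
    obtain i j where kij: "k = (i, j)" by (cases k)
    show "\<mu> k = 0"
    proof (cases "j = 0")
      case True
      show ?thesis
      proof (cases "i = 0")
        case True thus ?thesis using m00 kij \<open>j = 0\<close> by simp
      next
        case False thus ?thesis using m1 kij \<open>j = 0\<close> k by (simp add: C_mem)
      qed
    next
      case False thus ?thesis using m2 kij k by simp
    qed
  qed
qed


definition C1 :: "(nat \<times> nat) set" where "C1 = (\<lambda>i. (i, 0)) ` {1..<s}"
definition C0 :: "(nat \<times> nat) set" where "C0 = {c \<in> C. snd c \<noteq> 0}"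

lemma C_dec: "C = insert (0, 0) (C1 \<union> C0)"
proof -
  have "c \<in> C \<longleftrightarrow> c \<in> insert (0, 0) (C1 \<union> C0)" for c
  proof (cases c)
    case (Pair i j)
    show ?thesis
    proof
      assume c: "c \<in> C"
      show "c \<in> insert (0, 0) (C1 \<union> C0)"
      proof (cases "j = 0")
        case True
        hence "i = 0 \<or> i \<in> {1..<s}" using c Pair by (auto simp: C_mem)
        thus ?thesis using True Pair by (auto simp: C1_def)
      next
        case False thus ?thesis using c Pair by (simp add: C0_def)
      qed
    next
      assume "c \<in> insert (0, 0) (C1 \<union> C0)"
      thus "c \<in> C" using C00 a_pos by (auto simp: C1_def C0_def C_mem)
    qed
  qed
  thus ?thesis by blast
qed

lemma C_dec_disj: "(0, 0) \<notin> C1 \<union> C0" "C1 \<inter> C0 = {}"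
  by (auto simp: C1_def C0_def)

lemma fin_C1: "finite C1" and fin_C0: "finite C0"
  using fin_C by (auto simp: C1_def C0_def)

lemma card_C1: "card C1 = s - 1"
proof -
  have "card C1 = card {1..<s}" unfolding C1_def by (rule card_image) (auto simp: inj_on_def)
  thus ?thesis by simp
qed

lemma card_C0: "card C0 = sum_mset A - s"
proof -
  let ?Z = "(\<lambda>i. (i, 0)) ` {..<s}"
  have "C = C0 \<union> ?Z"
  proof -
    have "c \<in> C \<longleftrightarrow> c \<in> C0 \<union> ?Z" for c
      using a_pos by (cases c) (auto simp: C0_def C_mem)
    thus ?thesis by blast
  qed
  moreover have "C0 \<inter> ?Z = {}" by (auto simp: C0_def)
  moreover have "card ?Z = s" by (subst card_image) (auto simp: inj_on_def)
  ultimately have "card C = card C0 + s" using fin_C0 card_Un_disjoint[of C0 ?Z] by simp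
  thus ?thesis using card_C by simp
qed

lemma Vk_C1: "k \<in> C1 \<Longrightarrow> Vk k = V - V1" by (auto simp: C1_def Vk_def)
lemma Vk_C0: "k \<in> C0 \<Longrightarrow> Vk k = V - V0" by (auto simp: C0_def Vk_def)
lemma Vk_00: "Vk (0, 0) = V" by (simp add: Vk_def)

lemma prod_Vk:
  fixes g :: "'v set \<Rightarrow> 'b::comm_monoid_mult"
  shows "(\<Prod>k\<in>C. g (Vk k)) = g V * g (V - V1) ^ (s - 1) * g (V - V0) ^ (sum_mset A - s)"
proof -
  have "(\<Prod>k\<in>C. g (Vk k)) = g (Vk (0, 0)) * ((\<Prod>k\<in>C1. g (Vk k)) * (\<Prod>k\<in>C0. g (Vk k)))"
    unfolding C_dec using C_dec_disj fin_C1 fin_C0 by (simp add: prod.union_disjoint)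
  also have "(\<Prod>k\<in>C1. g (Vk k)) = g (V - V1) ^ (s - 1)"
    using Vk_C1 card_C1 by (simp add: prod_constant[symmetric] cong: prod.cong)
  also have "(\<Prod>k\<in>C0. g (Vk k)) = g (V - V0) ^ (sum_mset A - s)"
    using Vk_C0 card_C0 by (simp add: prod_constant[symmetric] cong: prod.cong)
  finally show ?thesis by (simp add: Vk_00 mult.assoc)
qed

lemma sum_Vk:
  "(\<Sum>k\<in>C. card (Vk k)) = card V + (s - 1) * card (V - V1) + (sum_mset A - s) * card (V - V0)"
proof -
  have "(\<Sum>k\<in>C. card (Vk k)) = card (Vk (0, 0)) + ((\<Sum>k\<in>C1. card (Vk k)) + (\<Sum>k\<in>C0. card (Vk k)))"
    unfolding C_dec using C_dec_disj fin_C1 fin_C0 by (simp add: sum.union_disjoint)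
  also have "(\<Sum>k\<in>C1. card (Vk k)) = (s - 1) * card (V - V1)"
    using Vk_C1 card_C1 by (simp cong: sum.cong)
  also have "(\<Sum>k\<in>C0. card (Vk k)) = (sum_mset A - s) * card (V - V0)"
    using Vk_C0 card_C0 by (simp cong: sum.cong)
  finally show ?thesis by (simp add: Vk_00 add.assoc)
qed

lemma card_Pv: "card (Pv v) = (if v \<in> V1 then 1 else if v \<in> V0 then s else sum_mset A)"
proof (cases "v \<in> V1")
  case True
  hence "Pv v = {C}" unfolding Pv_def using blk_V1 C00 by auto
  thus ?thesis using True by simp
next
  case False
  show ?thesis
  proof (cases "v \<in> V0")
    case True
    have "Pv v = Ci ` {..<s}"
    proof -
      have "Pv v = (\<lambda>c. Ci (fst c)) ` C" unfolding Pv_def using blk_V0[OF True False] by simp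
      also have "\<dots> = Ci ` (fst ` C)" by (simp add: image_image)
      also have "fst ` C = {..<s}"
      proof
        show "fst ` C \<subseteq> {..<s}" by (auto simp: C_def)
        show "{..<s} \<subseteq> fst ` C"
        proof
          fix i assume "i \<in> {..<s}"
          hence "(i, 0) \<in> C" using a_pos by (simp add: C_mem)
          thus "i \<in> fst ` C" by force
        qed
      qed
      finally show ?thesis .
    qed
    moreover have "inj_on Ci {..<s}"
    proof
      fix i i' assume i: "i \<in> {..<s}" and i': "i' \<in> {..<s}" and eq: "Ci i = Ci i'"
      have "(i, 0) \<in> Ci i" using a_pos i by (simp add: Ci_def)
      hence "(i, 0) \<in> Ci i'" using eq by simp
      thus "i = i'" by (auto simp: Ci_def)
    qed
    ultimately show ?thesis using True False by (simp add: card_image)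
  next
    case F0: False
    have "Pv v = (\<lambda>c. {c}) ` C" unfolding Pv_def using blk_nV0[OF F0] by simp
    moreover have "inj_on (\<lambda>c. {c}) C" by (auto simp: inj_on_def)
    ultimately show ?thesis using F0 False card_C by (simp add: card_image)
  qed
qed

lemma card_X_eq: "card X = card (Sigma C Vk)"
proof -
  have V1V: "V1 \<subseteq> V" using V10 V0V by blast
  have fV0: "finite V0" using finite_subset[OF V0V fin_V] .
  have fV1: "finite V1" "finite (V0 - V1)" "finite (V - V0)"
    using finite_subset[OF V1V fin_V] fV0 fin_V by auto
  have "card X = (\<Sum>v\<in>V. card (Pv v))" by (rule card_SigmaI[OF fin_V]) (simp add: fin_Pv)
  also have "\<dots> = (\<Sum>v\<in>V1 \<union> ((V0 - V1) \<union> (V - V0)). card (Pv v))"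
  proof -
    have "V = V1 \<union> ((V0 - V1) \<union> (V - V0))" using V1V V0V by blast
    thus ?thesis by (rule arg_cong[where f="\<lambda>S. \<Sum>v\<in>S. card (Pv v)"])
  qed
  also have "\<dots> =
      (\<Sum>v\<in>V1. card (Pv v)) + ((\<Sum>v\<in>V0 - V1. card (Pv v)) + (\<Sum>v\<in>V - V0. card (Pv v)))"
  proof -
    have d1: "V1 \<inter> ((V0 - V1) \<union> (V - V0)) = {}" using V10 by blast
    have d2: "(V0 - V1) \<inter> (V - V0) = {}" by blast
    show ?thesis
      using sum.union_disjoint[OF fV1(1) _ d1, of "\<lambda>v. card (Pv v)"]
        sum.union_disjoint[OF fV1(2) fV1(3) d2, of "\<lambda>v. card (Pv v)"] fV1 by simp
  qed
  also have "(\<Sum>v\<in>V1. card (Pv v)) = card V1" by (simp add: card_Pv)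
  also have "(\<Sum>v\<in>V0 - V1. card (Pv v)) = s * card (V0 - V1)" by (simp add: card_Pv)
  also have "(\<Sum>v\<in>V - V0. card (Pv v)) = sum_mset A * card (V - V0)"
  proof -
    have "\<And>v. v \<in> V - V0 \<Longrightarrow> card (Pv v) = sum_mset A" using V10 by (auto simp: card_Pv)
    hence "(\<Sum>v\<in>V - V0. card (Pv v)) = (\<Sum>v\<in>V - V0. sum_mset A)" by (rule sum.cong[OF refl])
    thus ?thesis by (simp only: sum_constant mult.commute of_nat_id)
  qed
  finally have L: "card X = card V1 + (s * card (V0 - V1) + sum_mset A * card (V - V0))" .
  have R: "card (Sigma C Vk) = card V + (s - 1) * card (V - V1) + (sum_mset A - s) * card (V - V0)"
    unfolding sum_Vk[symmetric] by (rule card_SigmaI[OF fin_C]) (use fin_V in \<open>auto simp: Vk_def\<close>)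
  have cV: "card V = card V1 + card (V0 - V1) + card (V - V0)"
  proof -
    have "V = V1 \<union> ((V0 - V1) \<union> (V - V0))" using V1V V0V by blast
    hence "card V = card (V1 \<union> ((V0 - V1) \<union> (V - V0)))" by simp
    also have "\<dots> = card V1 + (card (V0 - V1) + card (V - V0))"
    proof -
      have d1: "V1 \<inter> ((V0 - V1) \<union> (V - V0)) = {}" using V10 by blast
      have d2: "(V0 - V1) \<inter> (V - V0) = {}" by blast
      show ?thesis using card_Un_disjoint[OF fV1(1) _ d1] card_Un_disjoint[OF fV1(2) fV1(3) d2] fV1
        by simp
    qed
    finally show ?thesis by simp
  qed
  have cV1: "card (V - V1) = card (V0 - V1) + card (V - V0)"
  proof -
    have "V - V1 = (V0 - V1) \<union> (V - V0)" using V10 V0V by blast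
    moreover have "card ((V0 - V1) \<union> (V - V0)) = card (V0 - V1) + card (V - V0)"
      by (rule card_Un_disjoint[OF fV1(2) fV1(3)]) blast
    ultimately show ?thesis by simp
  qed
  obtain s' where s': "s = Suc s'" using s_pos by (cases s) auto
  obtain t where t: "sum_mset A = s + t" using s_le_r le_Suc_ex by blast
  show ?thesis unfolding L R cV cV1 t s' by (simp add: algebra_simps)
qed

lemma main:
  "spec H = spec G + repeat_mset (sum_mset A - size A) (dirichlet_spec G V0)
                  + repeat_mset (size A - 1) (dirichlet_spec G V1)"
proof -
  have lapG: "(\<lambda>v u. (if v = u then 1 else 0) - Nmat v u) = lap G" by (intro ext) (simp add: lap_G)
  have part: "charpoly_on X (LX Nmat) = (\<Prod>k\<in>C. charpoly_on (Vk k) (\<lambda>v u. (if v = u then 1 else 0) - Nmat v u))"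
  proof (rule partition_charpoly[OF fin_V fin_C fin_C])
    show "\<And>v B. v \<in> V \<Longrightarrow> B \<in> Pv v \<Longrightarrow> B \<subseteq> C" using Pv_sub by blast
    show "\<And>v c. v \<in> V \<Longrightarrow> c \<in> C \<Longrightarrow> \<exists>B\<in>Pv v. c \<in> B" using blk_self unfolding Pv_def by blast
    show "\<And>v B B' c. v \<in> V \<Longrightarrow> B \<in> Pv v \<Longrightarrow> B' \<in> Pv v \<Longrightarrow> c \<in> B \<Longrightarrow> c \<in> B' \<Longrightarrow> B = B'"
    proof -
      fix v B B' c assume "v \<in> V" "B \<in> Pv v" "B' \<in> Pv v" "c \<in> B" "c \<in> B'"
      moreover have "c \<in> C" using Pv_sub \<open>B \<in> Pv v\<close> \<open>c \<in> B\<close> by blast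
      ultimately show "B = B'" using blk_in_iff by metis
    qed
    show "\<And>k. k \<in> C \<Longrightarrow> Vk k \<subseteq> V" by (auto simp: Vk_def)
    show "\<And>k u B c c'. k \<in> C \<Longrightarrow> u \<in> Vk k \<Longrightarrow> B \<in> Pv u \<Longrightarrow> c \<in> B \<Longrightarrow> c' \<in> B \<Longrightarrow> bb k c = bb k c'"
      by (rule hyp_const)
    show "\<And>k v B. k \<in> C \<Longrightarrow> v \<in> V \<Longrightarrow> v \<notin> Vk k \<Longrightarrow> B \<in> Pv v \<Longrightarrow> (\<Sum>c\<in>B. bb k c) = 0"
      by (rule hyp_zero)
    show "\<And>\<mu>. \<forall>c\<in>C. (\<Sum>k\<in>C. \<mu> k * bb k c) = 0 \<Longrightarrow> \<forall>k\<in>C. \<mu> k = 0" by (rule hyp_indep)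
    show "card X = card (Sigma C Vk)" by (rule card_X_eq)
  qed
  let ?p = "\<lambda>W. charpoly_on W (lap G)"
  have "charpoly_on (mg_V H) (lap H) = ?p V * ?p (V - V1) ^ (s - 1) * ?p (V - V0) ^ (sum_mset A - s)"
    unfolding charpoly_H part lapG by (rule prod_Vk)
  moreover have nz: "?p (V - W) \<noteq> 0" for W by (rule charpoly_nonzero) (use fin_V in simp)
  moreover have nzV: "?p V \<noteq> 0" by (rule charpoly_nonzero[OF fin_V])
  ultimately have "spec H = proots (?p V) + repeat_mset (s - 1) (proots (?p (V - V1)))
      + repeat_mset (sum_mset A - s) (proots (?p (V - V0)))"
    unfolding spec_def by (simp add: proots_mult proots_power nz nzV)
  thus ?thesis unfolding spec_def dirichlet_spec_def s_eq by (simp add: add_ac)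
qed

end

theorem theorem5p7:
  fixes G :: "('v, 'e) mgraph" and V0 V1 :: "'v set" and A :: "nat multiset" and r s :: nat
  assumes "magnetic_graph G"
    and "V1 \<subseteq> V0" and "V0 \<subseteq> mg_V G"
    and "0 \<notin># A" and "A \<noteq> {#}"
    and "sum_mset A = r" and "size A = s"
  shows "spec (contracted_A_union G V0 A V1) =
           spec G + repeat_mset (r - s) (dirichlet_spec G V0)
                  + repeat_mset (s - 1) (dirichlet_spec G V1)"
proof -
  have cg: "cgraph G V0 V1 A" by (unfold_locales) (use assms in auto)
  show ?thesis using cgraph.main[OF cg] assms(6,7) by simp
qed

end
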